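(* Let $\mathfrak g$ be a real Lie algebra of dimension $2n$ with a Hermitian structure $(J,g)$, and let $\mathfrak a\subseteq\mathfrak g$ be an abelian ideal of codimension $2$ with $J\mathfrak a=\mathfrak a$. Then there exists a unitary frame $e_1,\dots,e_n$ of $\mathfrak g^{1,0}$ such that $\mathfrak a\otimes\mathbb C$ is spanned by $e_2,\dots,e_n,\bar e_2,\dots,\bar e_n$, and numbers $\lambda\ge0$, $v\in\mathbb C^{n-1}$, $X,Y,Z\in M_{n-1}(\mathbb C)$, such that, writing $\varphi=(\varphi_2,\dots,\varphi_n)^t$, $$d\varphi_1=-\lambda\,\varphi_1\wedge\bar\varphi_1,\qquad d\varphi=-\varphi_1\wedge\bar\varphi_1\,\bar v-\varphi_1\wedge{}^tX\varphi+\bar\varphi_1\wedge\bar Y\varphi-\varphi_1\wedge\bar Z\,\bar\varphi,$$ (i.e. $d\varphi_i=-\bar v_i\varphi_1\wedge\bar\varphi_1-\sum_jX_{ji}\varphi_1\wedge\varphi_j+\sum_j\overline{Y_{ij}}\bar\varphi_1\wedge\varphi_j-\sum_j\overline{Z_{ij}}\varphi_1\wedge\bar\varphi_j$). Moreover, for any such frame the data satisfy $$\lambda(X^\ast+Y)+[X^\ast,Y]-Z\bar Z=0,\qquad \lambda Z-(Z\,{}^tX+YZ)=0.$$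
   Context: A Hermitian structure on a real Lie algebra $\mathfrak g$ is an integrable almost complex structure $J$ together with a $J$-invariant inner product $g$. $\mathfrak g^{1,0}=\{x-\sqrt{-1}Jx\}$; $g$ extended complex-bilinearly; a unitary frame is a basis $e_1,\dots,e_n$ of $\mathfrak g^{1,0}$ with $g(e_i,\bar e_j)=\delta_{ij}$, with dual coframe $\varphi_1,\dots,\varphi_n$; $d$ is the Chevalley–Eilenberg differential ($d\alpha(x,y)=-\alpha([x,y])$). ${}^tM$ is the transpose, $\bar M$ the entrywise conjugate, $M^\ast={}^t\bar M$. *)

theory Defs
  imports "HOL-Analysis.Analysis"
begin

text \<open>A real Lie algebra: a finite-dimensional real vector space 'g (any euclidean_space
  type; its own inner product is NOT used) with a bracket B.\<close>
definition lie_algebra :: "('g::euclidean_space \<Rightarrow> 'g \<Rightarrow> 'g) \<Rightarrow> bool" where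
  "lie_algebra B \<longleftrightarrow> bilinear B \<and> (\<forall>x. B x x = 0) \<and>
     (\<forall>x y z. B x (B y z) + B y (B z x) + B z (B x y) = 0)"

text \<open>Integrable almost complex structure: J^2 = -1 and vanishing Nijenhuis tensor.\<close>
definition integrable_cx :: "('g::euclidean_space \<Rightarrow> 'g \<Rightarrow> 'g) \<Rightarrow> ('g \<Rightarrow> 'g) \<Rightarrow> bool" where
  "integrable_cx B J \<longleftrightarrow> linear J \<and> (\<forall>x. J (J x) = - x) \<and>
     (\<forall>x y. B (J x) (J y) - J (B (J x) y) - J (B x (J y)) - B x y = 0)"

definition herm_metric :: "('g::euclidean_space \<Rightarrow> 'g) \<Rightarrow> ('g \<Rightarrow> 'g \<Rightarrow> real) \<Rightarrow> bool" where
  "herm_metric J G \<longleftrightarrow> bilinear G \<and> (\<forall>x y. G x y = G y x) \<and> (\<forall>x. x \<noteq> 0 \<longrightarrow> G x x > 0) \<and>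
     (\<forall>x y. G (J x) (J y) = G x y)"

definition hermitian_structure where
  "hermitian_structure B J G \<longleftrightarrow> integrable_cx B J \<and> herm_metric J G"

definition abelian_ideal :: "('g::euclidean_space \<Rightarrow> 'g \<Rightarrow> 'g) \<Rightarrow> 'g set \<Rightarrow> bool" where
  "abelian_ideal B a \<longleftrightarrow> subspace a \<and> (\<forall>x\<in>a. \<forall>y. B x y \<in> a) \<and> (\<forall>x\<in>a. \<forall>y\<in>a. B x y = 0)"

section \<open>Complexification: a pair (x,y) stands for x + i y\<close>

definition csmul :: "complex \<Rightarrow> 'g::real_vector \<times> 'g \<Rightarrow> 'g \<times> 'g" where
  "csmul c v = (Re c *\<^sub>R fst v - Im c *\<^sub>R snd v, Re c *\<^sub>R snd v + Im c *\<^sub>R fst v)"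

definition cconj :: "'g::real_vector \<times> 'g \<Rightarrow> 'g \<times> 'g" where
  "cconj v = (fst v, - snd v)"

definition cspan :: "('g::real_vector \<times> 'g) set \<Rightarrow> ('g \<times> 'g) set" where
  "cspan S = {(\<Sum>s\<in>T. csmul (c s) s) | T c. finite T \<and> T \<subseteq> S}"

definition complexify :: "'g::real_vector set \<Rightarrow> ('g \<times> 'g) set" where
  "complexify a = {v. fst v \<in> a \<and> snd v \<in> a}"

text \<open>g^{1,0} = {x - i J x}\<close>
definition g10 :: "('g::real_vector \<Rightarrow> 'g) \<Rightarrow> ('g \<times> 'g) set" where
  "g10 J = {(x, - J x) | x. True}"

text \<open>Complex-bilinear extension of the metric.\<close>
definition Gc :: "('g \<Rightarrow> 'g \<Rightarrow> real) \<Rightarrow> 'g \<times> 'g \<Rightarrow> 'g \<times> 'g \<Rightarrow> complex" where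
  "Gc G v w = Complex (G (fst v) (fst w) - G (snd v) (snd w)) (G (fst v) (snd w) + G (snd v) (fst w))"

definition cext :: "('g \<Rightarrow> complex) \<Rightarrow> 'g \<times> 'g \<Rightarrow> complex" where
  "cext f v = f (fst v) + \<i> * f (snd v)"

definition unitary_frame :: "('g::real_vector \<Rightarrow> 'g) \<Rightarrow> ('g \<Rightarrow> 'g \<Rightarrow> real) \<Rightarrow> nat \<Rightarrow> (nat \<Rightarrow> 'g \<times> 'g) \<Rightarrow> bool" where
  "unitary_frame J G n e \<longleftrightarrow>
     (\<forall>k\<in>{1..n}. e k \<in> g10 J) \<and>
     g10 J \<subseteq> cspan (e ` {1..n}) \<and>
     (\<forall>c. (\<Sum>k\<in>{1..n}. csmul (c k) (e k)) = 0 \<longrightarrow> (\<forall>k\<in>{1..n}. c k = 0)) \<and>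
     (\<forall>i\<in>{1..n}. \<forall>j\<in>{1..n}. Gc G (e i) (cconj (e j)) = (if i = j then 1 else 0))"

text \<open>Dual coframe phi_1..phi_n (complex-valued real-linear functionals on g, extended
  complex-linearly): phi_k(e_j) = delta_kj, phi_k(conj e_j) = 0.\<close>
definition dual_coframe :: "nat \<Rightarrow> (nat \<Rightarrow> 'g::real_vector \<times> 'g) \<Rightarrow> (nat \<Rightarrow> 'g \<Rightarrow> complex) \<Rightarrow> bool" where
  "dual_coframe n e \<phi> \<longleftrightarrow> (\<forall>k\<in>{1..n}. linear (\<phi> k) \<and>
     (\<forall>j\<in>{1..n}. cext (\<phi> k) (e j) = (if k = j then 1 else 0) \<and> cext (\<phi> k) (cconj (e j)) = 0))"

section \<open>Forms (evaluated on real vectors; complex-bilinear extension is unique)\<close>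

definition cnjf :: "('g \<Rightarrow> complex) \<Rightarrow> 'g \<Rightarrow> complex" where
  "cnjf \<alpha> x = cnj (\<alpha> x)"

definition wedge :: "('g \<Rightarrow> complex) \<Rightarrow> ('g \<Rightarrow> complex) \<Rightarrow> 'g \<Rightarrow> 'g \<Rightarrow> complex" where
  "wedge \<alpha> \<beta> x y = \<alpha> x * \<beta> y - \<alpha> y * \<beta> x"

definition dCE :: "('g \<Rightarrow> 'g \<Rightarrow> 'g) \<Rightarrow> ('g \<Rightarrow> complex) \<Rightarrow> 'g \<Rightarrow> 'g \<Rightarrow> complex" where
  "dCE B \<alpha> x y = - \<alpha> (B x y)"

text \<open>The structure equations of the theorem, for a frame with coframe phi, with
  lambda real, v indexed by {2..n}, X Y Z matrices indexed by {2..n}x{2..n}.\<close>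
definition structure_eqs ::
  "('g \<Rightarrow> 'g \<Rightarrow> 'g) \<Rightarrow> nat \<Rightarrow> (nat \<Rightarrow> 'g \<Rightarrow> complex) \<Rightarrow> real \<Rightarrow> (nat \<Rightarrow> complex)
    \<Rightarrow> (nat \<Rightarrow> nat \<Rightarrow> complex) \<Rightarrow> (nat \<Rightarrow> nat \<Rightarrow> complex) \<Rightarrow> (nat \<Rightarrow> nat \<Rightarrow> complex) \<Rightarrow> bool" where
  "structure_eqs B n \<phi> lam v X Y Z \<longleftrightarrow>
     (\<forall>x y. dCE B (\<phi> 1) x y = - complex_of_real lam * wedge (\<phi> 1) (cnjf (\<phi> 1)) x y) \<and>
     (\<forall>i\<in>{2..n}. \<forall>x y. dCE B (\<phi> i) x y =
        - cnj (v i) * wedge (\<phi> 1) (cnjf (\<phi> 1)) x y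
        - (\<Sum>j\<in>{2..n}. X j i * wedge (\<phi> 1) (\<phi> j) x y)
        + (\<Sum>j\<in>{2..n}. cnj (Y i j) * wedge (cnjf (\<phi> 1)) (\<phi> j) x y)
        - (\<Sum>j\<in>{2..n}. cnj (Z i j) * wedge (\<phi> 1) (cnjf (\<phi> j)) x y))"

text \<open>The relations lambda(X^* + Y) + [X^*,Y] - Z conj(Z) = 0 and lambda Z - (Z X^t + Y Z) = 0,
  written entrywise over indices {2..n}.\<close>
definition structure_rels ::
  "nat \<Rightarrow> real \<Rightarrow> (nat \<Rightarrow> nat \<Rightarrow> complex) \<Rightarrow> (nat \<Rightarrow> nat \<Rightarrow> complex) \<Rightarrow> (nat \<Rightarrow> nat \<Rightarrow> complex) \<Rightarrow> bool" where
  "structure_rels n lam X Y Z \<longleftrightarrow>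
     (\<forall>i\<in>{2..n}. \<forall>j\<in>{2..n}.
        complex_of_real lam * (cnj (X j i) + Y i j)
        + (\<Sum>k\<in>{2..n}. cnj (X k i) * Y k j - Y i k * cnj (X j k))
        - (\<Sum>k\<in>{2..n}. Z i k * cnj (Z k j)) = 0) \<and>
     (\<forall>i\<in>{2..n}. \<forall>j\<in>{2..n}.
        complex_of_real lam * Z i j
        - ((\<Sum>k\<in>{2..n}. Z i k * X j k) + (\<Sum>k\<in>{2..n}. Y i k * Z k j)) = 0)"

end

theory Submission
  imports Defs
begin


lemma i_solve: "\<i> * z = w \<Longrightarrow> z = - \<i> * w"
proof -
  assume h: "\<i> * z = w"
  have "z = - (\<i> * (\<i> * z))" by simp
  also have "\<dots> = - \<i> * w" using h by simp
  finally show ?thesis .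
qed

lemma coframe_vals:
  assumes dc: "dual_coframe n e \<phi>" and k: "k \<in> {1..n}" and j: "j \<in> {1..n}"
  shows "\<phi> k (fst (e j)) = (if k = j then 1/2 else 0)"
    and "\<phi> k (- snd (e j)) = (if k = j then \<i>/2 else 0)"
proof -
  have lin: "linear (\<phi> k)" and c1: "cext (\<phi> k) (e j) = (if k = j then 1 else 0)"
    and c2: "cext (\<phi> k) (cconj (e j)) = 0" using dc k j unfolding dual_coframe_def by auto
  have neg: "\<phi> k (- snd (e j)) = - \<phi> k (snd (e j))" using lin by (simp add: linear_neg)
  from c1 c2 have a: "\<phi> k (fst (e j)) + \<i> * \<phi> k (snd (e j)) = (if k = j then 1 else 0)"
     and b: "\<phi> k (fst (e j)) - \<i> * \<phi> k (snd (e j)) = 0"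
    by (auto simp: cext_def cconj_def neg)
  from b have b': "\<phi> k (fst (e j)) = \<i> * \<phi> k (snd (e j))" by simp
  from a b' have "2 * (\<i> * \<phi> k (snd (e j))) = (if k = j then 1 else 0)" by simp
  then show "\<phi> k (fst (e j)) = (if k = j then 1/2 else 0)" using b' by (auto simp: field_simps del: One_nat_def)
  from a b' have "2 * (\<i> * \<phi> k (snd (e j))) = (if k = j then 1 else 0)" by simp
  then have "\<i> * (2 * \<phi> k (snd (e j))) = (if k = j then 1 else 0)" by (simp add: algebra_simps)
  from i_solve[OF this] have "\<phi> k (snd (e j)) = (if k = j then -\<i>/2 else 0)" by (auto simp: field_simps del: One_nat_def)
  then show "\<phi> k (- snd (e j)) = (if k = j then \<i>/2 else 0)" by (simp add: neg)
qed

lemma cnj_ifz: "cnj (if P then a else 0) = (if P then cnj a else 0)" by simp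
lemma mult_ifz_r: "c * (if P then a else 0) = (if P then c * a else (0::'a::mult_zero))" by simp
lemma minus_ifz: "- (if P then a else 0) = (if P then - a else (0::'a::group_add))" by simp
lemma div_ifz: "(if P then a else 0) / c = (if P then a / c else (0::'a::field))" by simp
lemma mult_ifz_l: "(if P then a else 0) * c = (if P then a * c else (0::'a::mult_zero))" by simp

lemma jac_eval:
  fixes B :: "'g::euclidean_space \<Rightarrow> 'g \<Rightarrow> 'g" and \<phi> :: "nat \<Rightarrow> 'g \<Rightarrow> complex"
  assumes L: "lie_algebra B"
    and S1: "\<And>x y. \<phi> 1 (B x y) = complex_of_real lam * wedge (\<phi> 1) (cnjf (\<phi> 1)) x y"
    and Si: "\<And>i x y. i \<in> {2..n} \<Longrightarrow> \<phi> i (B x y) = cnj (v i) * wedge (\<phi> 1) (cnjf (\<phi> 1)) x y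
        + (\<Sum>j\<in>{2..n}. X j i * wedge (\<phi> 1) (\<phi> j) x y)
        - (\<Sum>j\<in>{2..n}. cnj (Y i j) * wedge (cnjf (\<phi> 1)) (\<phi> j) x y)
        + (\<Sum>j\<in>{2..n}. cnj (Z i j) * wedge (\<phi> 1) (cnjf (\<phi> j)) x y)"
    and lin: "linear (\<phi> i)"
    and i: "i \<in> {2..n}" and m: "m \<in> {2..n}"
    and x1a: "\<phi> 1 x1 = 1/2" and x1b: "\<And>k. k \<in> {2..n} \<Longrightarrow> \<phi> k x1 = 0"
    and x2a: "\<phi> 1 x2 = \<i>/2" and x2b: "\<And>k. k \<in> {2..n} \<Longrightarrow> \<phi> k x2 = 0"
    and Qa: "\<phi> 1 Q = 0" and Qb: "\<And>k. k \<in> {2..n} \<Longrightarrow> \<phi> k Q = (if k = m then q else 0)"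
  shows "q * ((\<Sum>k\<in>{2..n}. - X k i * cnj (Y k m) + cnj (Y i k) * X m k + cnj (Z i k) * Z k m)
             - complex_of_real lam * (X m i + cnj (Y i m)))
       + cnj q * ((\<Sum>k\<in>{2..n}. cnj (Y i k) * cnj (Z k m) + cnj (Z i k) * cnj (X m k))
             - complex_of_real lam * cnj (Z i m)) = 0"
proof -
  note wd = wedge_def cnjf_def
  define b2Q where "b2Q = B x2 Q"
  define bQ1 where "bQ1 = B Q x1"
  define b12 where "b12 = B x1 x2"
  have b2Q1: "\<phi> 1 b2Q = 0" unfolding b2Q_def S1 by (simp add: wd x2a Qa del: One_nat_def)
  have b2Qj: "\<phi> j b2Q = \<i>/2 * (X m j * q + cnj (Y j m) * q + cnj (Z j m) * cnj q)" if j: "j \<in> {2..n}" for j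
    unfolding b2Q_def Si[OF j] using m
    by (simp add: wd x2a Qa x2b Qb cnj_ifz mult_ifz_r mult_ifz_l minus_ifz div_ifz algebra_simps cong: if_cong del: One_nat_def)
  have bQ11: "\<phi> 1 bQ1 = 0" unfolding bQ1_def S1 by (simp add: wd x1a Qa del: One_nat_def)
  have bQ1j: "\<phi> j bQ1 = - 1/2 * (X m j * q - cnj (Y j m) * q + cnj (Z j m) * cnj q)" if j: "j \<in> {2..n}" for j
    unfolding bQ1_def Si[OF j] using m
    by (simp add: wd x1a Qa x1b Qb cnj_ifz mult_ifz_r mult_ifz_l minus_ifz div_ifz algebra_simps cong: if_cong del: One_nat_def)
  have b121: "\<phi> 1 b12 = - \<i> * complex_of_real lam / 2" unfolding b12_def S1 by (simp add: wd x1a x2a field_simps del: One_nat_def)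
  have b12j: "\<phi> j b12 = - \<i> * cnj (v j) / 2" if j: "j \<in> {2..n}" for j
    unfolding b12_def Si[OF j] by (simp add: wd x1a x2a x1b x2b field_simps del: One_nat_def)
  have jac: "B x1 b2Q + B x2 bQ1 + B Q b12 = 0"
    using L unfolding lie_algebra_def b2Q_def bQ1_def b12_def by blast
  have "\<phi> i (B x1 b2Q + B x2 bQ1 + B Q b12) = 0" unfolding jac using lin by (simp add: linear_0)
  then have J0: "\<phi> i (B x1 b2Q) + \<phi> i (B x2 bQ1) + \<phi> i (B Q b12) = 0"
    using lin by (simp add: linear_add)
  have T1: "\<phi> i (B x1 b2Q) = (\<Sum>k\<in>{2..n}. X k i * (1/2 * \<phi> k b2Q))
      - (\<Sum>k\<in>{2..n}. cnj (Y i k) * (1/2 * \<phi> k b2Q)) + (\<Sum>k\<in>{2..n}. cnj (Z i k) * (1/2 * cnj (\<phi> k b2Q)))"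
    by (simp add: Si[OF i] wd x1a b2Q1 x1b del: One_nat_def)
  have T2: "\<phi> i (B x2 bQ1) = (\<Sum>k\<in>{2..n}. X k i * (\<i>/2 * \<phi> k bQ1))
      - (\<Sum>k\<in>{2..n}. cnj (Y i k) * (-\<i>/2 * \<phi> k bQ1)) + (\<Sum>k\<in>{2..n}. cnj (Z i k) * (\<i>/2 * cnj (\<phi> k bQ1)))"
    by (simp add: Si[OF i] wd x2a bQ11 x2b del: One_nat_def)
  have T3: "\<phi> i (B Q b12) = \<i> * complex_of_real lam / 2 * (X m i * q + cnj (Y i m) * q + cnj (Z i m) * cnj q)"
    using m by (simp add: Si[OF i] wd Qa Qb b121 cnj_ifz mult_ifz_r mult_ifz_l minus_ifz div_ifz algebra_simps cong: if_cong del: One_nat_def)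
  define f where "f k = (X k i * (1/2 * \<phi> k b2Q) - cnj (Y i k) * (1/2 * \<phi> k b2Q) + cnj (Z i k) * (1/2 * cnj (\<phi> k b2Q)))
     + (X k i * (\<i>/2 * \<phi> k bQ1) - cnj (Y i k) * (-\<i>/2 * \<phi> k bQ1) + cnj (Z i k) * (\<i>/2 * cnj (\<phi> k bQ1)))" for k
  have T12: "\<phi> i (B x1 b2Q) + \<phi> i (B x2 bQ1) = (\<Sum>k\<in>{2..n}. f k)"
    unfolding T1 T2 f_def by (simp only: sum.distrib sum_subtractf)
  define g where "g k = q * (- X k i * cnj (Y k m) + cnj (Y i k) * X m k + cnj (Z i k) * Z k m)
      + cnj q * (cnj (Y i k) * cnj (Z k m) + cnj (Z i k) * cnj (X m k))" for k
  have C: "q * ((\<Sum>k\<in>{2..n}. - X k i * cnj (Y k m) + cnj (Y i k) * X m k + cnj (Z i k) * Z k m)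
             - complex_of_real lam * (X m i + cnj (Y i m)))
       + cnj q * ((\<Sum>k\<in>{2..n}. cnj (Y i k) * cnj (Z k m) + cnj (Z i k) * cnj (X m k))
             - complex_of_real lam * cnj (Z i m))
     = (\<Sum>k\<in>{2..n}. g k) - (q * complex_of_real lam * (X m i + cnj (Y i m)) + cnj q * complex_of_real lam * cnj (Z i m))"
  proof -
    have "(\<Sum>k\<in>{2..n}. g k) = q * (\<Sum>k\<in>{2..n}. - X k i * cnj (Y k m) + cnj (Y i k) * X m k + cnj (Z i k) * Z k m)
       + cnj q * (\<Sum>k\<in>{2..n}. cnj (Y i k) * cnj (Z k m) + cnj (Z i k) * cnj (X m k))"
      unfolding g_def by (rule trans[OF sum.distrib]) (simp only: sum_distrib_left)
    then show ?thesis by (simp add: algebra_simps)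
  qed
  have fg: "f k = - (\<i>/2) * g k" if k: "k \<in> {2..n}" for k
    unfolding f_def g_def b2Qj[OF k] bQ1j[OF k] by (simp add: algebra_simps)
  have "(\<Sum>k\<in>{2..n}. f k) = - (\<i>/2) * (\<Sum>k\<in>{2..n}. g k)"
    by (simp add: fg sum_distrib_left)
  with J0 T12 T3 have "- (\<i>/2) * ((\<Sum>k\<in>{2..n}. g k) - (q * complex_of_real lam * (X m i + cnj (Y i m)) + cnj q * complex_of_real lam * cnj (Z i m))) = 0"
    by (simp add: algebra_simps)
  then show ?thesis unfolding C by simp
qed

lemma part2:
  fixes B :: "'g::euclidean_space \<Rightarrow> 'g \<Rightarrow> 'g" and \<phi> :: "nat \<Rightarrow> 'g \<Rightarrow> complex"
  assumes L: "lie_algebra B" and dc: "dual_coframe n e \<phi>" and se: "structure_eqs B n \<phi> lam v X Y Z"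
  shows "structure_rels n lam X Y Z"
proof -
  have S1: "\<phi> 1 (B x y) = complex_of_real lam * wedge (\<phi> 1) (cnjf (\<phi> 1)) x y" for x y
    using se unfolding structure_eqs_def dCE_def by auto
  have Si: "\<phi> i (B x y) = cnj (v i) * wedge (\<phi> 1) (cnjf (\<phi> 1)) x y
        + (\<Sum>j\<in>{2..n}. X j i * wedge (\<phi> 1) (\<phi> j) x y)
        - (\<Sum>j\<in>{2..n}. cnj (Y i j) * wedge (cnjf (\<phi> 1)) (\<phi> j) x y)
        + (\<Sum>j\<in>{2..n}. cnj (Z i j) * wedge (\<phi> 1) (cnjf (\<phi> j)) x y)" if i: "i \<in> {2..n}" for i x y
  proof -
    have "dCE B (\<phi> i) x y = - cnj (v i) * wedge (\<phi> 1) (cnjf (\<phi> 1)) x y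
        - (\<Sum>j\<in>{2..n}. X j i * wedge (\<phi> 1) (\<phi> j) x y)
        + (\<Sum>j\<in>{2..n}. cnj (Y i j) * wedge (cnjf (\<phi> 1)) (\<phi> j) x y)
        - (\<Sum>j\<in>{2..n}. cnj (Z i j) * wedge (\<phi> 1) (cnjf (\<phi> j)) x y)"
      using se i unfolding structure_eqs_def by blast
    then show ?thesis unfolding dCE_def by (simp add: algebra_simps)
  qed
  have M: "(\<Sum>k\<in>{2..n}. - X k i * cnj (Y k m) + cnj (Y i k) * X m k + cnj (Z i k) * Z k m)
             - complex_of_real lam * (X m i + cnj (Y i m)) = 0 \<and>
          (\<Sum>k\<in>{2..n}. cnj (Y i k) * cnj (Z k m) + cnj (Z i k) * cnj (X m k))
             - complex_of_real lam * cnj (Z i m) = 0" if i: "i \<in> {2..n}" and m: "m \<in> {2..n}" for i m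
  proof -
    have n1: "1 \<in> {1..n}" using i by auto
    have sub: "k \<in> {1..n}" if "k \<in> {2..n}" for k using that by auto
    have lin: "linear (\<phi> i)" using dc i unfolding dual_coframe_def by auto
    note cv = coframe_vals[OF dc]
    have x1a: "\<phi> 1 (fst (e 1)) = 1/2" using cv(1)[OF n1 n1] by simp
    have x1b: "\<phi> k (fst (e 1)) = 0" if "k \<in> {2..n}" for k using cv(1)[OF sub[OF that] n1] that by auto
    have x2a: "\<phi> 1 (- snd (e 1)) = \<i>/2" using cv(2)[OF n1 n1] by simp
    have x2b: "\<phi> k (- snd (e 1)) = 0" if "k \<in> {2..n}" for k using cv(2)[OF sub[OF that] n1] that by auto
    have Qa1: "\<phi> 1 (fst (e m)) = 0" using cv(1)[OF n1 sub[OF m]] m by auto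
    have Qb1: "\<phi> k (fst (e m)) = (if k = m then 1/2 else 0)" if "k \<in> {2..n}" for k using cv(1)[OF sub[OF that] sub[OF m]] by auto
    have Qa2: "\<phi> 1 (- snd (e m)) = 0" using cv(2)[OF n1 sub[OF m]] m by auto
    have Qb2: "\<phi> k (- snd (e m)) = (if k = m then \<i>/2 else 0)" if "k \<in> {2..n}" for k using cv(2)[OF sub[OF that] sub[OF m]] by auto
    note E1 = jac_eval[OF L S1 Si lin i m x1a x1b x2a x2b Qa1 Qb1]
    note E2 = jac_eval[OF L S1 Si lin i m x1a x1b x2a x2b Qa2 Qb2]
    define P where "P = (\<Sum>k\<in>{2..n}. - X k i * cnj (Y k m) + cnj (Y i k) * X m k + cnj (Z i k) * Z k m)
             - complex_of_real lam * (X m i + cnj (Y i m))"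
    define N where "N = (\<Sum>k\<in>{2..n}. cnj (Y i k) * cnj (Z k m) + cnj (Z i k) * cnj (X m k))
             - complex_of_real lam * cnj (Z i m)"
    have e1: "P + N = 0" using E1 unfolding P_def[symmetric] N_def[symmetric] by (simp add: field_simps)
    have e2: "P - N = 0" using E2 unfolding P_def[symmetric] N_def[symmetric] by (simp add: field_simps)
    from e1 e2 have "P = 0" "N = 0" by (simp_all add: algebra_simps)
    then show ?thesis unfolding P_def N_def by simp
  qed
  show ?thesis unfolding structure_rels_def
  proof (intro conjI ballI)
    fix i j assume i: "i \<in> {2..n}" and j: "j \<in> {2..n}"
    note Mij = M[OF i j]
    have e: "complex_of_real lam * (cnj (X j i) + Y i j)
        + (\<Sum>k\<in>{2..n}. cnj (X k i) * Y k j - Y i k * cnj (X j k))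
        - (\<Sum>k\<in>{2..n}. Z i k * cnj (Z k j))
       = - cnj ((\<Sum>k\<in>{2..n}. - X k i * cnj (Y k j) + cnj (Y i k) * X j k + cnj (Z i k) * Z k j)
             - complex_of_real lam * (X j i + cnj (Y i j)))"
    proof -
      have "(\<Sum>k\<in>{2..n}. cnj (X k i) * Y k j - Y i k * cnj (X j k)) - (\<Sum>k\<in>{2..n}. Z i k * cnj (Z k j))
         = (\<Sum>k\<in>{2..n}. - cnj (- X k i * cnj (Y k j) + cnj (Y i k) * X j k + cnj (Z i k) * Z k j))"
        by (rule trans[OF sum_subtractf[symmetric]], rule sum.cong) (auto simp: algebra_simps)
      also have "\<dots> = - cnj (\<Sum>k\<in>{2..n}. - X k i * cnj (Y k j) + cnj (Y i k) * X j k + cnj (Z i k) * Z k j)"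
        by (simp only: sum_negf cnj_sum)
      finally show ?thesis by (simp add: algebra_simps)
    qed
    show "complex_of_real lam * (cnj (X j i) + Y i j)
        + (\<Sum>k\<in>{2..n}. cnj (X k i) * Y k j - Y i k * cnj (X j k))
        - (\<Sum>k\<in>{2..n}. Z i k * cnj (Z k j)) = 0" unfolding e conjunct1[OF Mij] by simp
  next
    fix i j assume i: "i \<in> {2..n}" and j: "j \<in> {2..n}"
    note Mij = M[OF i j]
    have e: "complex_of_real lam * Z i j - ((\<Sum>k\<in>{2..n}. Z i k * X j k) + (\<Sum>k\<in>{2..n}. Y i k * Z k j))
       = - cnj ((\<Sum>k\<in>{2..n}. cnj (Y i k) * cnj (Z k j) + cnj (Z i k) * cnj (X j k))
             - complex_of_real lam * cnj (Z i j))"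
      by (simp add: cnj_sum sum.distrib algebra_simps)
    show "complex_of_real lam * Z i j - ((\<Sum>k\<in>{2..n}. Z i k * X j k) + (\<Sum>k\<in>{2..n}. Y i k * Z k j)) = 0"
      unfolding e conjunct2[OF Mij] by simp
  qed
qed



locale hmet =
  fixes J :: "'g::euclidean_space \<Rightarrow> 'g" and G :: "'g \<Rightarrow> 'g \<Rightarrow> real"
  assumes linJ: "linear J" and JJ[simp]: "J (J x) = - x" and hm: "herm_metric J G"
begin

lemma Gbil: "bilinear G" using hm unfolding herm_metric_def by blast
lemma Gsym: "G x y = G y x" using hm unfolding herm_metric_def by blast
lemma Gpos: "x \<noteq> 0 \<Longrightarrow> G x x > 0" using hm unfolding herm_metric_def by blast
lemma GJJ[simp]: "G (J x) (J y) = G x y" using hm unfolding herm_metric_def by blast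
lemma GJl: "G (J x) y = - G x (J y)"
proof -
  have "G (J x) y = G (J (J x)) (J y)" by (rule GJJ[symmetric])
  also have "\<dots> = - G x (J y)" using bilinear_lneg[OF Gbil] by simp
  finally show ?thesis .
qed
lemma GxJx[simp]: "G x (J x) = 0"
proof -
  have "G x (J x) = G (J x) (J (J x))" by (rule GJJ[symmetric])
  also have "\<dots> = - G (J x) x" using bilinear_rneg[OF Gbil] by simp
  also have "\<dots> = - G x (J x)" using Gsym by simp
  finally show ?thesis by simp
qed
lemma GJxx[simp]: "G (J x) x = 0" using GxJx Gsym by metis

lemma linl: "linear (\<lambda>x. G x y)" using Gbil unfolding bilinear_def by blast
lemma linr: "linear (\<lambda>y. G x y)" using Gbil unfolding bilinear_def by blast

lemma G_suml: "G (sum f S) y = (\<Sum>i\<in>S. G (f i) y)"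
  using linear_sum[OF linl, of f S y] by (simp add: o_def)
lemma G_scalel[simp]: "G (c *\<^sub>R x) y = c * G x y" using bilinear_lmul[OF Gbil] by simp
lemma G_scaler[simp]: "G x (c *\<^sub>R y) = c * G x y" using bilinear_rmul[OF Gbil] by simp
lemma G_addl[simp]: "G (x + z) y = G x y + G z y" using bilinear_ladd[OF Gbil] by simp
lemma G_addr[simp]: "G x (y + z) = G x y + G x z" using bilinear_radd[OF Gbil] by simp
lemma G_subl[simp]: "G (x - z) y = G x y - G z y" using bilinear_lsub[OF Gbil] by simp
lemma G_subr[simp]: "G x (y - z) = G x y - G x z" using bilinear_rsub[OF Gbil] by simp
lemma G_negl[simp]: "G (- x) y = - G x y" using bilinear_lneg[OF Gbil] by simp
lemma G_negr[simp]: "G x (- y) = - G x y" using bilinear_rneg[OF Gbil] by simp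
lemma G_0l[simp]: "G 0 y = 0" using bilinear_lzero[OF Gbil] by simp
lemma G_0r[simp]: "G x 0 = 0" using bilinear_rzero[OF Gbil] by simp
lemma J_add[simp]: "J (x + y) = J x + J y" using linJ by (simp add: linear_add)
lemma J_scale[simp]: "J (c *\<^sub>R x) = c *\<^sub>R J x" using linJ by (simp add: linear_scale)
lemma J_neg[simp]: "J (- x) = - J x" using linJ by (simp add: linear_neg)
lemma J_diff[simp]: "J (x - y) = J x - J y" using linJ by (simp add: linear_diff)
lemma J_0[simp]: "J 0 = 0" using linJ by (simp add: linear_0)
lemma J_sum: "J (sum f S) = (\<Sum>i\<in>S. J (f i))" using linear_sum[OF linJ] by (simp add: o_def)

definition on_set :: "'g set \<Rightarrow> bool" where
  "on_set S \<longleftrightarrow> finite S \<and> (\<forall>s\<in>S. \<forall>t\<in>S. G s t = (if s = t then 1/2 else 0))"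

lemma on_indep: assumes "on_set S" shows "independent S"
proof -
  have fin: "finite S" and on: "\<And>s t. s \<in> S \<Longrightarrow> t \<in> S \<Longrightarrow> G s t = (if s = t then 1/2 else 0)"
    using assms unfolding on_set_def by auto
  show ?thesis unfolding independent_explicit
  proof (intro conjI fin allI impI ballI)
    fix c t assume z: "(\<Sum>v\<in>S. c v *\<^sub>R v) = 0" and t: "t \<in> S"
    have "0 = G (\<Sum>v\<in>S. c v *\<^sub>R v) t" using z by simp
    also have "\<dots> = (\<Sum>v\<in>S. c v * G v t)" by (simp add: G_suml)
    also have "\<dots> = (\<Sum>v\<in>S. if v = t then c v / 2 else 0)" by (rule sum.cong) (auto simp: on t)
    also have "\<dots> = c t / 2" using fin t by simp
    finally show "c t = 0" by simp
  qed
qed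

lemma on_expand: assumes "on_set S" and "x \<in> span S" shows "x = (\<Sum>s\<in>S. (2 * G x s) *\<^sub>R s)"
proof -
  have fin: "finite S" and on: "\<And>s t. s \<in> S \<Longrightarrow> t \<in> S \<Longrightarrow> G s t = (if s = t then 1/2 else 0)"
    using assms unfolding on_set_def by auto
  obtain c where x: "x = (\<Sum>v\<in>S. c v *\<^sub>R v)" using assms(2) span_finite[OF fin] by auto
  have "G x t = c t / 2" if t: "t \<in> S" for t
  proof -
    have "G x t = (\<Sum>v\<in>S. c v * G v t)" unfolding x by (simp add: G_suml)
    also have "\<dots> = (\<Sum>v\<in>S. if v = t then c v / 2 else 0)" by (rule sum.cong) (auto simp: on t)
    also have "\<dots> = c t / 2" using fin t by simp
    finally show ?thesis .
  qed
  then have "(\<Sum>s\<in>S. (2 * G x s) *\<^sub>R s) = (\<Sum>v\<in>S. c v *\<^sub>R v)" by (intro sum.cong refl) (metis mult.commute nonzero_mult_div_cancel_left times_divide_eq_right zero_neq_numeral)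
  then show ?thesis using x by simp
qed

definition ONF :: "(nat \<Rightarrow> 'g) \<Rightarrow> nat set \<Rightarrow> bool" where
  "ONF u I \<longleftrightarrow> (\<forall>k\<in>I. \<forall>l\<in>I. G (u k) (u l) = (if k = l then 1/2 else 0) \<and> G (u k) (J (u l)) = 0)"

lemma ONF_facts:
  assumes "ONF u I"
  shows ONF_norm: "\<And>k. k \<in> I \<Longrightarrow> G (u k) (u k) = 1/2"
    and ONF_orth: "\<And>k l. k \<in> I \<Longrightarrow> l \<in> I \<Longrightarrow> G (u k) (u l) = (if k = l then 1/2 else 0)"
    and ONF_orthJ: "\<And>k l. k \<in> I \<Longrightarrow> l \<in> I \<Longrightarrow> G (u k) (J (u l)) = 0"
    and ONF_inj: "\<And>k l. k \<in> I \<Longrightarrow> l \<in> I \<Longrightarrow> u k = u l \<Longrightarrow> k = l"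
    and ONF_dist: "\<And>k l. k \<in> I \<Longrightarrow> l \<in> I \<Longrightarrow> u k \<noteq> J (u l)"
proof -
  show on: "\<And>k l. k \<in> I \<Longrightarrow> l \<in> I \<Longrightarrow> G (u k) (u l) = (if k = l then 1/2 else 0)"
    and oj: "\<And>k l. k \<in> I \<Longrightarrow> l \<in> I \<Longrightarrow> G (u k) (J (u l)) = 0" using assms unfolding ONF_def by auto
  show "\<And>k. k \<in> I \<Longrightarrow> G (u k) (u k) = 1/2" using on by simp
  show "\<And>k l. k \<in> I \<Longrightarrow> l \<in> I \<Longrightarrow> u k = u l \<Longrightarrow> k = l"
  proof (rule ccontr)
    fix k l assume k: "k \<in> I" and l: "l \<in> I" and e: "u k = u l" and ne: "k \<noteq> l"
    have "G (u k) (u l) = 0" using on[OF k l] ne by simp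
    moreover have "G (u k) (u l) = 1/2" using on[OF k k] e by simp
    ultimately show False by simp
  qed
  show "\<And>k l. k \<in> I \<Longrightarrow> l \<in> I \<Longrightarrow> u k \<noteq> J (u l)"
  proof
    fix k l assume k: "k \<in> I" and l: "l \<in> I" and e: "u k = J (u l)"
    have "G (u k) (J (u l)) = 0" using oj[OF k l] by simp
    moreover have "G (u k) (J (u l)) = 1/2" using on[OF k k] e by simp
    ultimately show False by simp
  qed
qed

lemma ONF_set:
  assumes fin: "finite I" and o: "ONF u I"
  shows "on_set (u ` I \<union> (\<lambda>k. J (u k)) ` I)" and "card (u ` I \<union> (\<lambda>k. J (u k)) ` I) = 2 * card I"
proof -
  note f = ONF_facts[OF o]
  have injJ: "J x = J y \<Longrightarrow> x = y" for x y
  proof -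
    assume "J x = J y" then have "J (J x) = J (J y)" by simp
    then show "x = y" by simp
  qed
  show "on_set (u ` I \<union> (\<lambda>k. J (u k)) ` I)" unfolding on_set_def
  proof (intro conjI ballI)
    show "finite (u ` I \<union> (\<lambda>k. J (u k)) ` I)" using fin by simp
  next
    fix s t assume s: "s \<in> u ` I \<union> (\<lambda>k. J (u k)) ` I" and t: "t \<in> u ` I \<union> (\<lambda>k. J (u k)) ` I"
    show "G s t = (if s = t then 1/2 else 0)"
    proof -
      { fix k l assume k: "k \<in> I" and l: "l \<in> I"
        have "G (u k) (u l) = (if u k = u l then 1/2 else 0)" using f(2)[OF k l] f(4)[OF k l] by auto
        moreover have "G (u k) (J (u l)) = (if u k = J (u l) then 1/2 else 0)" using f(3)[OF k l] f(5)[OF k l] by auto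
        moreover have "G (J (u k)) (u l) = (if J (u k) = u l then 1/2 else 0)"
          using f(3)[OF l k] f(5)[OF l k] GJl[of "u k" "u l"] Gsym[of "u k" "J (u l)"] Gsym[of "u l" "J (u k)"] by auto
        moreover have "G (J (u k)) (J (u l)) = (if J (u k) = J (u l) then 1/2 else 0)"
          using f(2)[OF k l] f(4)[OF k l] injJ by auto
        ultimately have "G (u k) (u l) = (if u k = u l then 1/2 else 0) \<and> G (u k) (J (u l)) = (if u k = J (u l) then 1/2 else 0)
          \<and> G (J (u k)) (u l) = (if J (u k) = u l then 1/2 else 0) \<and> G (J (u k)) (J (u l)) = (if J (u k) = J (u l) then 1/2 else 0)"
          by blast }
      then show ?thesis using s t by auto
    qed
  qed
  have i1: "inj_on u I" using f(4) by (auto simp: inj_on_def)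
  have i2: "inj_on (\<lambda>k. J (u k)) I" using f(4) injJ by (auto simp: inj_on_def)
  have dj: "u ` I \<inter> (\<lambda>k. J (u k)) ` I = {}" using f(5) by auto
  show "card (u ` I \<union> (\<lambda>k. J (u k)) ` I) = 2 * card I"
    using card_Un_disjoint[OF _ _ dj] fin card_image[OF i1] card_image[OF i2] by simp
qed

lemma GS: "subspace S \<Longrightarrow> (\<forall>x\<in>S. J x \<in> S) \<Longrightarrow> 2 * m \<le> dim S \<Longrightarrow> \<exists>u. (\<forall>k<m. u k \<in> S) \<and> ONF u {..<m}"
proof (induction m arbitrary: S)
  case 0
  then show ?case by (auto simp: ONF_def)
next
  case (Suc m)
  have "\<not> S \<subseteq> {0}"
  proof
    assume "S \<subseteq> {0}" then have "dim S = 0" by simp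
    with Suc.prems(3) show False by simp
  qed
  then obtain x where x: "x \<in> S" "x \<noteq> 0" by auto
  have gx: "G x x > 0" using Gpos[OF x(2)] .
  define u0 where "u0 = (1 / sqrt (2 * G x x)) *\<^sub>R x"
  have u0S: "u0 \<in> S" unfolding u0_def using Suc.prems(1) x(1) by (simp add: subspace_scale)
  have Ju0S: "J u0 \<in> S" using Suc.prems(2) u0S by blast
  have n0: "G u0 u0 = 1/2" using gx unfolding u0_def by (simp add: power2_eq_square[symmetric])
  define S' where "S' = {y\<in>S. G y u0 = 0 \<and> G y (J u0) = 0}"
  have sub': "subspace S'" unfolding S'_def subspace_def using Suc.prems(1)
    by (auto simp: subspace_0 subspace_add subspace_scale)
  have J': "\<forall>y\<in>S'. J y \<in> S'" unfolding S'_def using Suc.prems(2) GJl by auto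
  have cover: "S \<subseteq> span (insert u0 (insert (J u0) S'))"
  proof
    fix y assume y: "y \<in> S"
    define a where "a = 2 * G y u0"
    define b where "b = 2 * G y (J u0)"
    define y' where "y' = y - a *\<^sub>R u0 - b *\<^sub>R J u0"
    have "y' \<in> S" unfolding y'_def using Suc.prems(1) y u0S Ju0S by (simp add: subspace_diff subspace_scale)
    moreover have "G y' u0 = 0" unfolding y'_def a_def b_def using n0 GJxx by simp
    moreover have "G y' (J u0) = 0" unfolding y'_def a_def b_def using n0 by simp
    ultimately have y'S: "y' \<in> S'" unfolding S'_def by simp
    have "y = y' + a *\<^sub>R u0 + b *\<^sub>R J u0" unfolding y'_def by simp
    moreover have "y' + a *\<^sub>R u0 + b *\<^sub>R J u0 \<in> span (insert u0 (insert (J u0) S'))"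
      using y'S by (intro span_add span_scale span_base) auto
    ultimately show "y \<in> span (insert u0 (insert (J u0) S'))" by simp
  qed
  have "dim S \<le> dim (insert u0 (insert (J u0) S'))"
    using dim_subset[OF cover] by simp
  also have "\<dots> \<le> dim S' + 2" using dim_insert[of u0 "insert (J u0) S'"] dim_insert[of "J u0" S'] by (auto split: if_splits)
  finally have "2 * m \<le> dim S'" using Suc.prems(3) by simp
  from Suc.IH[OF sub' J' this] obtain u' where u': "\<forall>k<m. u' k \<in> S'" "ONF u' {..<m}" by blast
  define u where "u = u'(m := u0)"
  have "\<forall>k<Suc m. u k \<in> S" using u'(1) u0S unfolding u_def S'_def by auto
  moreover have "ONF u {..<Suc m}" unfolding ONF_def
  proof (intro ballI)
    fix k l assume k: "k \<in> {..<Suc m}" and l: "l \<in> {..<Suc m}"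
    have o1: "G (u' k) (u' l) = (if k = l then 1/2 else 0) \<and> G (u' k) (J (u' l)) = 0" if "k < m" "l < m" for k l
      using u'(2) that unfolding ONF_def by auto
    have s1: "G (u' k) u0 = 0 \<and> G (u' k) (J u0) = 0" if "k < m" for k using u'(1) that unfolding S'_def by auto
    show "G (u k) (u l) = (if k = l then 1/2 else 0) \<and> G (u k) (J (u l)) = 0"
    proof (cases "k = m"; cases "l = m")
      assume "k = m" "l = m" then show ?thesis unfolding u_def using n0 by simp
    next
      assume "k = m" "l \<noteq> m" then show ?thesis unfolding u_def using s1[of l] l Gsym[of u0 "u' l"] GJl[of u0 "u' l"] Gsym[of "u' l" "J u0"]
        by auto
    next
      assume "k \<noteq> m" "l = m" then show ?thesis unfolding u_def using s1[of k] k by auto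
    next
      assume "k \<noteq> m" "l \<noteq> m" then show ?thesis unfolding u_def using o1[of k l] k l by auto
    qed
  qed
  ultimately show ?case by blast
qed

lemma lie_antisym: assumes "lie_algebra B" shows "B y x = - B x y"
proof -
  have bl: "bilinear B" and z: "\<And>x. B x x = 0" using assms unfolding lie_algebra_def by auto
  have "B (x+y) (x+y) = B x x + B x y + (B y x + B y y)" by (simp add: bilinear_ladd[OF bl] bilinear_radd[OF bl])
  then have "B x y + B y x = 0" using z by simp
  then show ?thesis by (simp add: add_eq_0_iff)
qed

lemma rot_unit:
  assumes L: "lie_algebra B" and n0: "G u0 u0 = 1/2"
  shows "\<exists>u1 c d. u1 = c *\<^sub>R u0 + d *\<^sub>R J u0 \<and> G u1 u1 = 1/2 \<and>
     G (B u1 (J u1)) u1 = 0 \<and> G (B u1 (J u1)) (J u1) \<le> 0"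
proof -
  have bl: "bilinear B" and z: "\<And>x. B x x = 0" using L unfolding lie_algebra_def by auto
  define b where "b = B u0 (J u0)"
  define p where "p = 2 * G b u0"
  define q where "q = 2 * G b (J u0)"
  have nJ: "G (J u0) (J u0) = 1/2" using n0 by simp
  show ?thesis
  proof (cases "p = 0 \<and> q = 0")
    case True
    then show ?thesis
      by (intro exI[of _ u0] exI[of _ 1] exI[of _ 0]) (auto simp: n0 p_def q_def b_def)
  next
    case False
    define r where "r = sqrt (p^2 + q^2)"
    have pq: "p^2 + q^2 > 0" using False by (auto simp: sum_power2_gt_zero_iff)
    have r0: "r > 0" unfolding r_def using pq by simp
    have rr: "r * r = p^2 + q^2" unfolding r_def using pq by (simp add: real_sqrt_mult_self)
    define c where "c = - q / r"
    define d where "d = p / r"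
    define u1 where "u1 = c *\<^sub>R u0 + d *\<^sub>R J u0"
    have "c * c + d * d = (p * p + q * q) / (r * r)" unfolding c_def d_def using r0 by (simp add: field_simps)
    then have cd: "c * c + d * d = 1" using rr r0 False by (simp add: power2_eq_square)
    have Ju1: "J u1 = c *\<^sub>R J u0 - d *\<^sub>R u0" unfolding u1_def by simp
    have Bu: "B u1 (J u1) = b"
    proof -
      have "B u1 (J u1) = (c * c) *\<^sub>R B u0 (J u0) - (d * d) *\<^sub>R B (J u0) u0"
        unfolding u1_def Ju1
        by (simp add: bilinear_ladd[OF bl] bilinear_radd[OF bl] bilinear_lsub[OF bl] bilinear_rsub[OF bl]
            bilinear_lmul[OF bl] bilinear_rmul[OF bl] z algebra_simps)
      also have "\<dots> = (c * c + d * d) *\<^sub>R b" unfolding b_def lie_antisym[OF L, of "J u0" u0] by (simp add: algebra_simps)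
      finally show ?thesis using cd by simp
    qed
    have "G u1 u1 = (c * c + d * d) / 2" unfolding u1_def using n0 nJ Gsym[of "J u0" u0] by (simp add: algebra_simps)
    then have "G u1 u1 = 1/2" using cd by simp
    moreover have "G (B u1 (J u1)) u1 = 0"
    proof -
      have "G b u1 = c * G b u0 + d * G b (J u0)" unfolding u1_def by simp
      also have "\<dots> = c * (p/2) + d * (q/2)" by (simp add: p_def q_def)
      also have "\<dots> = 0" unfolding c_def d_def using r0 by (simp add: field_simps)
      finally show ?thesis using Bu by simp
    qed
    moreover have "G (B u1 (J u1)) (J u1) = - r / 2"
    proof -
      have "G (B u1 (J u1)) (J u1) = G b (J u1)" using Bu by simp
      also have "\<dots> = c * (q / 2) - d * (p / 2)" unfolding Ju1 p_def q_def by simp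
      also have "\<dots> = - (p^2 + q^2) / (2 * r)" unfolding c_def d_def using r0 by (simp add: field_simps power2_eq_square)
      also have "\<dots> = - r / 2" using rr r0 by (simp add: field_simps)
      finally show ?thesis .
    qed
    ultimately show ?thesis using r0 unfolding u1_def by (intro exI[of _ u1] exI[of _ c] exI[of _ d]) (auto simp: u1_def)
  qed
qed

lemma frame_exists:
  assumes L: "lie_algebra B" and sa: "subspace a" and Ja: "\<forall>x\<in>a. J x \<in> a"
    and da: "dim a + 2 = DIM('g)" and dn: "DIM('g) = 2 * n"
  shows "\<exists>u. ONF u {1..n} \<and> (\<forall>k\<in>{2..n}. u k \<in> a) \<and> (\<forall>x\<in>a. G x (u 1) = 0 \<and> G x (J (u 1)) = 0)
     \<and> G (B (u 1) (J (u 1))) (u 1) = 0 \<and> G (B (u 1) (J (u 1))) (J (u 1)) \<le> 0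
     \<and> span (u ` {2..n} \<union> (\<lambda>k. J (u k)) ` {2..n}) = a
     \<and> span (u ` {1..n} \<union> (\<lambda>k. J (u k)) ` {1..n}) = UNIV"
proof -
  have n1: "n \<ge> 1" using dn DIM_positive[where 'a='g] by linarith
  have dima: "dim a = 2 * (n - 1)" using da dn n1 by simp
  obtain u' where u'a: "\<forall>k<n-1. u' k \<in> a" and u'o: "ONF u' {..<n-1}"
    using GS[OF sa Ja, of "n-1"] dima by auto
  define A' where "A' = u' ` {..<n-1} \<union> (\<lambda>k. J (u' k)) ` {..<n-1}"
  have onA: "on_set A'" and cA: "card A' = 2 * (n - 1)" using ONF_set[OF _ u'o] unfolding A'_def by auto
  have A'a: "A' \<subseteq> a" unfolding A'_def using u'a Ja by auto
  have spA: "span A' = a"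
  proof (rule span_subspace[OF A'a _ sa])
    show "a \<subseteq> span A'" using card_ge_dim_independent[OF A'a on_indep[OF onA]] cA dima by simp
  qed
  have finA: "finite A'" using onA unfolding on_set_def by simp
  have onA2: "\<And>s t. s \<in> A' \<Longrightarrow> t \<in> A' \<Longrightarrow> G s t = (if s = t then 1/2 else 0)" using onA unfolding on_set_def by blast
  have "a \<noteq> UNIV"
  proof
    assume "a = UNIV" then have "dim a = DIM('g)" by simp
    then show False using da by simp
  qed
  then obtain z where z: "z \<notin> a" by auto
  define z' where "z' = z - (\<Sum>s\<in>A'. (2 * G z s) *\<^sub>R s)"
  have orth: "G z' t = 0" if t: "t \<in> A'" for t
  proof -
    have "G (\<Sum>s\<in>A'. (2 * G z s) *\<^sub>R s) t = (\<Sum>s\<in>A'. 2 * G z s * G s t)" by (simp add: G_suml)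
    also have "\<dots> = (\<Sum>s\<in>A'. if s = t then G z s else 0)" by (rule sum.cong) (auto simp: onA2 t)
    also have "\<dots> = G z t" using finA t by simp
    finally show ?thesis unfolding z'_def by simp
  qed
  have orth_a: "G x z' = 0" if x: "x \<in> a" for x
  proof -
    have "x = (\<Sum>s\<in>A'. (2 * G x s) *\<^sub>R s)" using on_expand[OF onA] x spA by simp
    then have "G x z' = G (\<Sum>s\<in>A'. (2 * G x s) *\<^sub>R s) z'" by simp
    also have "\<dots> = (\<Sum>s\<in>A'. 2 * G x s * G s z')" by (simp add: G_suml)
    also have "\<dots> = 0" using orth Gsym by (simp add: sum.neutral)
    finally show ?thesis .
  qed
  have z'0: "z' \<noteq> 0"
  proof
    assume "z' = 0"
    then have "z = (\<Sum>s\<in>A'. (2 * G z s) *\<^sub>R s)" unfolding z'_def by simp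
    also have "\<dots> \<in> span A'" by (intro span_sum span_scale span_base)
    finally show False using z spA by simp
  qed
  define u0 where "u0 = (1 / sqrt (2 * G z' z')) *\<^sub>R z'"
  have gz: "G z' z' > 0" using Gpos[OF z'0] .
  have n0: "G u0 u0 = 1/2" using gz unfolding u0_def by (simp add: power2_eq_square[symmetric])
  have ou0: "G x u0 = 0 \<and> G x (J u0) = 0" if x: "x \<in> a" for x
  proof -
    have "G x u0 = 0" unfolding u0_def using orth_a[OF x] by simp
    moreover have "G (J x) u0 = 0" unfolding u0_def using orth_a Ja x by simp
    ultimately show ?thesis using GJl[of x u0] by simp
  qed
  obtain u1 c d where u1: "u1 = c *\<^sub>R u0 + d *\<^sub>R J u0" "G u1 u1 = 1/2"
    "G (B u1 (J u1)) u1 = 0" "G (B u1 (J u1)) (J u1) \<le> 0"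
    using rot_unit[OF L n0] by blast
  have ou1: "G x u1 = 0 \<and> G x (J u1) = 0" if x: "x \<in> a" for x
    using ou0[OF x] unfolding u1(1) by simp
  define u where "u k = (if k = 1 then u1 else u' (k - 2))" for k
  have ua: "\<forall>k\<in>{2..n}. u k \<in> a" unfolding u_def using u'a by auto
  have u'on: "G (u' k) (u' l) = (if k = l then 1/2 else 0) \<and> G (u' k) (J (u' l)) = 0" if "k < n - 1" "l < n - 1" for k l
    using u'o that unfolding ONF_def by auto
  have ONFu: "ONF u {1..n}" unfolding ONF_def
  proof (intro ballI)
    fix k l assume k: "k \<in> {1..n}" and l: "l \<in> {1..n}"
    show "G (u k) (u l) = (if k = l then 1/2 else 0) \<and> G (u k) (J (u l)) = 0"
    proof (cases "k = 1"; cases "l = 1")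
      assume "k = 1" "l = 1" then show ?thesis unfolding u_def using u1(2) by simp
    next
      assume a1: "k = 1" "l \<noteq> 1"
      then have "u' (l - 2) \<in> a" using u'a l by auto
      then show ?thesis unfolding u_def using a1 ou1[of "u' (l-2)"] ou1[of "J (u' (l-2))"] Ja Gsym[of u1]
        by auto
    next
      assume a1: "k \<noteq> 1" "l = 1"
      then have "u' (k - 2) \<in> a" using u'a k by auto
      then show ?thesis unfolding u_def using a1 ou1[of "u' (k-2)"] by auto
    next
      assume a1: "k \<noteq> 1" "l \<noteq> 1"
      then have "k - 2 < n - 1" "l - 2 < n - 1" "(k - 2 = l - 2) = (k = l)" using k l by auto
      then show ?thesis unfolding u_def using a1 u'on[of "k-2" "l-2"] by auto
    qed
  qed
  have im1: "u ` {2..n} = u' ` {..<n-1}"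
  proof
    show "u ` {2..n} \<subseteq> u' ` {..<n-1}" unfolding u_def by auto
    show "u' ` {..<n-1} \<subseteq> u ` {2..n}"
    proof
      fix x assume "x \<in> u' ` {..<n-1}"
      then obtain j where j: "j < n - 1" "x = u' j" by auto
      then have "x = u (j + 2)" "j + 2 \<in> {2..n}" unfolding u_def by auto
      then show "x \<in> u ` {2..n}" by blast
    qed
  qed
  have im2: "(\<lambda>k. J (u k)) ` {2..n} = (\<lambda>k. J (u' k)) ` {..<n-1}"
  proof -
    have "(\<lambda>k. J (u k)) ` {2..n} = J ` (u ` {2..n})" by auto
    also have "\<dots> = J ` (u' ` {..<n-1})" unfolding im1 ..
    also have "\<dots> = (\<lambda>k. J (u' k)) ` {..<n-1}" by auto
    finally show ?thesis .
  qed
  have spa: "span (u ` {2..n} \<union> (\<lambda>k. J (u k)) ` {2..n}) = a" unfolding im1 im2 A'_def[symmetric] spA ..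
  have onS: "on_set (u ` {1..n} \<union> (\<lambda>k. J (u k)) ` {1..n})" and cS: "card (u ` {1..n} \<union> (\<lambda>k. J (u k)) ` {1..n}) = 2 * n"
    using ONF_set[OF _ ONFu] by auto
  have "UNIV \<subseteq> span (u ` {1..n} \<union> (\<lambda>k. J (u k)) ` {1..n})"
    using card_ge_dim_independent[OF _ on_indep[OF onS], of UNIV] cS dn by simp
  then have spU: "span (u ` {1..n} \<union> (\<lambda>k. J (u k)) ` {1..n}) = UNIV" by blast
  have u1': "u 1 = u1" unfolding u_def by simp
  show ?thesis
    apply (rule exI[of _ u])
    using ONFu ua ou1 u1 spa spU unfolding u1' by blast
qed

lemma fam_expand:
  assumes fin: "finite I" and o: "ONF u I" and x: "x \<in> span (u ` I \<union> (\<lambda>k. J (u k)) ` I)"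
  shows "x = (\<Sum>k\<in>I. (2 * G x (u k)) *\<^sub>R u k + (2 * G x (J (u k))) *\<^sub>R J (u k))"
proof -
  note f = ONF_facts[OF o]
  have injJ: "J x = J y \<Longrightarrow> x = y" for x y
  proof -
    assume "J x = J y" then have "J (J x) = J (J y)" by simp
    then show "x = y" by simp
  qed
  have i1: "inj_on u I" using f(4) by (auto simp: inj_on_def)
  have i2: "inj_on (\<lambda>k. J (u k)) I" using f(4) injJ by (auto simp: inj_on_def)
  have dj: "u ` I \<inter> (\<lambda>k. J (u k)) ` I = {}" using f(5) by auto
  have "x = (\<Sum>s\<in>u ` I \<union> (\<lambda>k. J (u k)) ` I. (2 * G x s) *\<^sub>R s)"
    using on_expand[OF ONF_set(1)[OF fin o] x] .
  also have "\<dots> = (\<Sum>s\<in>u ` I. (2 * G x s) *\<^sub>R s) + (\<Sum>s\<in>(\<lambda>k. J (u k)) ` I. (2 * G x s) *\<^sub>R s)"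
    using fin dj by (simp add: sum.union_disjoint)
  also have "\<dots> = (\<Sum>k\<in>I. (2 * G x (u k)) *\<^sub>R u k) + (\<Sum>k\<in>I. (2 * G x (J (u k))) *\<^sub>R J (u k))"
    by (simp only: sum.reindex[OF i1] sum.reindex[OF i2] o_def)
  also have "\<dots> = (\<Sum>k\<in>I. (2 * G x (u k)) *\<^sub>R u k + (2 * G x (J (u k))) *\<^sub>R J (u k))"
    by (simp add: sum.distrib)
  finally show ?thesis .
qed

end

locale frame = hmet +
  fixes B :: "'a \<Rightarrow> 'a \<Rightarrow> 'a" and a :: "'a set" and n :: nat and u :: "nat \<Rightarrow> 'a"
  assumes L: "lie_algebra B" and integ: "integrable_cx B J" and ab: "abelian_ideal B a"
    and Ja: "\<forall>x\<in>a. J x \<in> a"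
    and ONFu: "ONF u {1..n}" and ua: "\<forall>k\<in>{2..n}. u k \<in> a"
    and u1a: "\<forall>x\<in>a. G x (u 1) = 0 \<and> G x (J (u 1)) = 0"
    and lam0: "G (B (u 1) (J (u 1))) (u 1) = 0" and lam1: "G (B (u 1) (J (u 1))) (J (u 1)) \<le> 0"
    and spa: "span (u ` {2..n} \<union> (\<lambda>k. J (u k)) ` {2..n}) = a"
    and spU: "span (u ` {1..n} \<union> (\<lambda>k. J (u k)) ` {1..n}) = UNIV"
    and n1: "1 \<le> n"
begin

definition ee :: "nat \<Rightarrow> 'a \<times> 'a" where "ee k = (u k, - J (u k))"
definition ph :: "nat \<Rightarrow> 'a \<Rightarrow> complex" where
  "ph k x = complex_of_real (G x (u k)) + \<i> * complex_of_real (G x (J (u k)))"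

lemma on_u: "k \<in> {1..n} \<Longrightarrow> l \<in> {1..n} \<Longrightarrow> G (u k) (u l) = (if k = l then 1/2 else 0)"
  using ONF_facts(2)[OF ONFu] by blast
lemma on_uJ: "k \<in> {1..n} \<Longrightarrow> l \<in> {1..n} \<Longrightarrow> G (u k) (J (u l)) = 0"
  using ONF_facts(3)[OF ONFu] by blast
lemma on_Ju: "k \<in> {1..n} \<Longrightarrow> l \<in> {1..n} \<Longrightarrow> G (J (u k)) (u l) = 0"
  using on_uJ[of l k] Gsym[of "J (u k)" "u l"] by simp

lemma ph_u: "k \<in> {1..n} \<Longrightarrow> j \<in> {1..n} \<Longrightarrow> ph k (u j) = (if k = j then 1/2 else 0)"
  unfolding ph_def using on_u[of j k] on_uJ[of j k] by auto
lemma ph_Ju: "k \<in> {1..n} \<Longrightarrow> j \<in> {1..n} \<Longrightarrow> ph k (J (u j)) = (if k = j then \<i>/2 else 0)"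
  unfolding ph_def using on_u[of j k] on_Ju[of j k] by auto
lemma ph_J: "ph k (J x) = \<i> * ph k x"
  unfolding ph_def using GJl[of x "u k"] by (simp add: algebra_simps)
lemma ph_lin: "linear (ph k)"
  by (rule linearI) (simp_all add: ph_def algebra_simps scaleR_conv_of_real)
lemma ph_add[simp]: "ph k (x + y) = ph k x + ph k y" using ph_lin by (simp add: linear_add)
lemma ph_neg[simp]: "ph k (- x) = - ph k x" using ph_lin by (simp add: linear_neg)
lemma ph_diff[simp]: "ph k (x - y) = ph k x - ph k y" using ph_lin by (simp add: linear_diff)
lemma ph_0[simp]: "ph k 0 = 0" using ph_lin by (simp add: linear_0)
lemma ph1_a: "x \<in> a \<Longrightarrow> ph 1 x = 0" unfolding ph_def using u1a by simp

lemma inj_u: "k \<in> {1..n} \<Longrightarrow> l \<in> {1..n} \<Longrightarrow> u k = u l \<Longrightarrow> k = l"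
  using ONF_facts(4)[OF ONFu] by blast
lemma Ju_ne_u: "k \<in> {1..n} \<Longrightarrow> l \<in> {1..n} \<Longrightarrow> J (u k) \<noteq> u l"
  using ONF_facts(5)[OF ONFu] by metis

lemma dual: "dual_coframe n ee ph"
  unfolding dual_coframe_def
proof (intro ballI conjI)
  fix k j assume k: "k \<in> {1..n}" and j: "j \<in> {1..n}"
  show "linear (ph k)" by (rule ph_lin)
  show "cext (ph k) (ee j) = (if k = j then 1 else 0)"
    unfolding cext_def ee_def using ph_u[OF k j] ph_Ju[OF k j] by auto
  show "cext (ph k) (cconj (ee j)) = 0"
    unfolding cext_def ee_def cconj_def using ph_u[OF k j] ph_Ju[OF k j] by auto
qed

lemma fst_ee[simp]: "fst (ee k) = u k" unfolding ee_def by simp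
lemma csmul_ee: "csmul c (ee k) = (Re c *\<^sub>R u k + Im c *\<^sub>R J (u k), - J (Re c *\<^sub>R u k + Im c *\<^sub>R J (u k)))"
  unfolding csmul_def ee_def by (simp add: algebra_simps)

lemma unitary: "unitary_frame J G n ee"
  unfolding unitary_frame_def
proof (intro conjI ballI subsetI allI impI)
  fix k assume "k \<in> {1..n}" then show "ee k \<in> g10 J" unfolding g10_def ee_def by auto
next
  fix v assume "v \<in> g10 J"
  then obtain x where v: "v = (x, - J x)" unfolding g10_def by auto
  have x: "x = (\<Sum>k\<in>{1..n}. (2 * G x (u k)) *\<^sub>R u k + (2 * G x (J (u k))) *\<^sub>R J (u k))"
    using fam_expand[OF _ ONFu, of x] spU by simp
  define c where "c s = Complex (2 * G x (fst s)) (2 * G x (J (fst s)))" for s :: "'a \<times> 'a"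
  have inj: "inj_on ee {1..n}" using inj_u unfolding ee_def inj_on_def by auto
  have "(\<Sum>s\<in>ee ` {1..n}. csmul (c s) s) = (\<Sum>k\<in>{1..n}. csmul (c (ee k)) (ee k))"
    using sum.reindex[OF inj] by (simp add: o_def)
  also have "\<dots> = v"
  proof -
    have "(\<Sum>k\<in>{1..n}. csmul (c (ee k)) (ee k)) = (\<Sum>k\<in>{1..n}. ((2 * G x (u k)) *\<^sub>R u k + (2 * G x (J (u k))) *\<^sub>R J (u k),
        - J ((2 * G x (u k)) *\<^sub>R u k + (2 * G x (J (u k))) *\<^sub>R J (u k))))"
      by (rule sum.cong) (simp_all add: csmul_ee c_def)
    also have "\<dots> = (x, - J x)"
    proof (rule prod_eqI)
      show "fst (\<Sum>k\<in>{1..n}. ((2 * G x (u k)) *\<^sub>R u k + (2 * G x (J (u k))) *\<^sub>R J (u k),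
        - J ((2 * G x (u k)) *\<^sub>R u k + (2 * G x (J (u k))) *\<^sub>R J (u k)))) = fst (x, - J x)"
        unfolding fst_sum using x by simp
      show "snd (\<Sum>k\<in>{1..n}. ((2 * G x (u k)) *\<^sub>R u k + (2 * G x (J (u k))) *\<^sub>R J (u k),
        - J ((2 * G x (u k)) *\<^sub>R u k + (2 * G x (J (u k))) *\<^sub>R J (u k)))) = snd (x, - J x)"
        unfolding snd_sum snd_conv sum_negf J_sum[symmetric] using x by simp
    qed
    finally show ?thesis using v by simp
  qed
  finally show "v \<in> cspan (ee ` {1..n})" unfolding cspan_def by blast
next
  fix c assume z: "(\<Sum>k\<in>{1..n}. csmul (c k) (ee k)) = 0"
  fix j assume j: "j \<in> {1..n}"
  have f0: "(\<Sum>k\<in>{1..n}. Re (c k) *\<^sub>R u k + Im (c k) *\<^sub>R J (u k)) = 0"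
    using arg_cong[OF z, of fst] unfolding fst_sum by (simp add: csmul_ee)
  have "G (\<Sum>k\<in>{1..n}. Re (c k) *\<^sub>R u k + Im (c k) *\<^sub>R J (u k)) (u j) = Re (c j) / 2"
  proof -
    have "G (\<Sum>k\<in>{1..n}. Re (c k) *\<^sub>R u k + Im (c k) *\<^sub>R J (u k)) (u j) = (\<Sum>k\<in>{1..n}. if k = j then Re (c k) / 2 else 0)"
      unfolding G_suml by (rule sum.cong[OF refl]) (simp add: on_u[OF _ j] on_Ju[OF _ j])
    then show ?thesis using j by simp
  qed
  moreover have "G (\<Sum>k\<in>{1..n}. Re (c k) *\<^sub>R u k + Im (c k) *\<^sub>R J (u k)) (J (u j)) = Im (c j) / 2"
  proof -
    have "G (\<Sum>k\<in>{1..n}. Re (c k) *\<^sub>R u k + Im (c k) *\<^sub>R J (u k)) (J (u j)) = (\<Sum>k\<in>{1..n}. if k = j then Im (c k) / 2 else 0)"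
      unfolding G_suml by (rule sum.cong[OF refl]) (simp add: on_u[OF _ j] on_uJ[OF _ j])
    then show ?thesis using j by simp
  qed
  ultimately show "c j = 0" using f0 by (simp add: complex_eq_iff)
next
  fix i j assume i: "i \<in> {1..n}" and j: "j \<in> {1..n}"
  show "Gc G (ee i) (cconj (ee j)) = (if i = j then 1 else 0)"
    unfolding Gc_def ee_def cconj_def using on_u[OF i j] on_uJ[OF i j] on_Ju[OF i j]
    by (simp add: complex_eq_iff one_complex.code)
qed

lemma two_scale: "(2 * c) *\<^sub>R (x::'b::real_vector) = c *\<^sub>R x + c *\<^sub>R x"
  by (metis mult_2 scaleR_add_left)

lemma ONF_mono: "ONF u I \<Longrightarrow> I' \<subseteq> I \<Longrightarrow> ONF u I'" unfolding ONF_def by blast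

lemma sub_a: "subspace a" using ab unfolding abelian_ideal_def by blast

lemma cspan_a: "cspan (ee ` {2..n} \<union> cconj ` ee ` {2..n}) = complexify a"
proof
  have mem: "fst s \<in> a \<and> snd s \<in> a" if "s \<in> ee ` {2..n} \<union> cconj ` ee ` {2..n}" for s
    using that ua Ja sub_a unfolding ee_def cconj_def by (auto simp: subspace_neg)
  show "cspan (ee ` {2..n} \<union> cconj ` ee ` {2..n}) \<subseteq> complexify a"
  proof
    fix v assume "v \<in> cspan (ee ` {2..n} \<union> cconj ` ee ` {2..n})"
    then obtain T c where v: "v = (\<Sum>s\<in>T. csmul (c s) s)" and T: "T \<subseteq> ee ` {2..n} \<union> cconj ` ee ` {2..n}"
      unfolding cspan_def by blast
    have memT: "fst s \<in> a" "snd s \<in> a" if "s \<in> T" for s using mem T that by blast+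
    have f1: "fst (csmul (c s) s) \<in> a" if "s \<in> T" for s
      using memT[OF that] unfolding csmul_def by (auto intro!: subspace_diff[OF sub_a] subspace_scale[OF sub_a])
    have f2: "snd (csmul (c s) s) \<in> a" if "s \<in> T" for s
      using memT[OF that] unfolding csmul_def by (auto intro!: subspace_add[OF sub_a] subspace_scale[OF sub_a])
    have "fst v \<in> a" unfolding v fst_sum by (rule subspace_sum[OF sub_a]) (rule f1)
    moreover have "snd v \<in> a" unfolding v snd_sum by (rule subspace_sum[OF sub_a]) (rule f2)
    ultimately show "v \<in> complexify a" unfolding complexify_def by simp
  qed
next
  show "complexify a \<subseteq> cspan (ee ` {2..n} \<union> cconj ` ee ` {2..n})"
  proof
    fix v assume "v \<in> complexify a"
    then obtain p q where v: "v = (p, q)" and p: "p \<in> a" and q: "q \<in> a" unfolding complexify_def by (cases v) auto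
    have o2: "ONF u {2..n}" using ONF_mono[OF ONFu] by auto
    have pe: "p = (\<Sum>k\<in>{2..n}. (2 * G p (u k)) *\<^sub>R u k + (2 * G p (J (u k))) *\<^sub>R J (u k))"
      using fam_expand[OF _ o2, of p] spa p by simp
    have qe: "q = (\<Sum>k\<in>{2..n}. (2 * G q (u k)) *\<^sub>R u k + (2 * G q (J (u k))) *\<^sub>R J (u k))"
      using fam_expand[OF _ o2, of q] spa q by simp
    define c where "c s = Complex (G p (fst s) + G q (snd s)) (G q (fst s) - G p (snd s))" for s :: "'a \<times> 'a"
    have inj1: "inj_on ee {2..n}" using inj_u unfolding ee_def inj_on_def by auto
    have inj2: "inj_on (\<lambda>k. cconj (ee k)) {2..n}" using inj_u unfolding ee_def cconj_def inj_on_def by auto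
    have dj: "ee ` {2..n} \<inter> cconj ` ee ` {2..n} = {}"
    proof (rule ccontr)
      assume "ee ` {2..n} \<inter> cconj ` ee ` {2..n} \<noteq> {}"
      then obtain w where w1: "w \<in> ee ` {2..n}" and w2: "w \<in> cconj ` ee ` {2..n}" by blast
      from w1 obtain k where k: "k \<in> {2..n}" and wk: "w = ee k" by blast
      from w2 obtain l where l: "l \<in> {2..n}" and wl: "w = cconj (ee l)" by blast
      from wk wl have e: "ee k = cconj (ee l)" by simp
      then have "u k = u l" "- J (u k) = J (u l)" unfolding ee_def cconj_def by auto
      then have "J (u k) + J (u k) = 0" by (simp add: eq_neg_iff_add_eq_0[symmetric])
      then have "(2::real) *\<^sub>R J (u k) = 0" by (simp add: scaleR_2)
      then have "J (u k) = 0" by simp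
      then have "J (J (u k)) = 0" by simp
      then have "u k = 0" by simp
      then show False using on_u[of k k] k by simp
    qed
    have im: "cconj ` ee ` {2..n} = (\<lambda>k. cconj (ee k)) ` {2..n}" by auto
    have "(\<Sum>s\<in>ee ` {2..n} \<union> cconj ` ee ` {2..n}. csmul (c s) s)
        = (\<Sum>s\<in>ee ` {2..n}. csmul (c s) s) + (\<Sum>s\<in>cconj ` ee ` {2..n}. csmul (c s) s)"
      using dj by (simp add: sum.union_disjoint)
    also have "\<dots> = (\<Sum>k\<in>{2..n}. csmul (c (ee k)) (ee k)) + (\<Sum>k\<in>{2..n}. csmul (c (cconj (ee k))) (cconj (ee k)))"
      unfolding im by (simp only: sum.reindex[OF inj1] sum.reindex[OF inj2] o_def)
    also have "\<dots> = (\<Sum>k\<in>{2..n}. csmul (c (ee k)) (ee k) + csmul (c (cconj (ee k))) (cconj (ee k)))"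
      by (simp add: sum.distrib)
    also have "\<dots> = (p, q)"
    proof (rule prod_eqI)
      have "fst (csmul (c (ee k)) (ee k) + csmul (c (cconj (ee k))) (cconj (ee k)))
          = (2 * G p (u k)) *\<^sub>R u k + (2 * G p (J (u k))) *\<^sub>R J (u k)" for k
        unfolding c_def csmul_def ee_def cconj_def two_scale by (simp add: algebra_simps scaleR_add_left scaleR_diff_left)
      then show "fst (\<Sum>k\<in>{2..n}. csmul (c (ee k)) (ee k) + csmul (c (cconj (ee k))) (cconj (ee k))) = fst (p, q)"
        unfolding fst_sum using pe by simp
      have "snd (csmul (c (ee k)) (ee k) + csmul (c (cconj (ee k))) (cconj (ee k)))
          = (2 * G q (u k)) *\<^sub>R u k + (2 * G q (J (u k))) *\<^sub>R J (u k)" for k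
        unfolding c_def csmul_def ee_def cconj_def two_scale by (simp add: algebra_simps scaleR_add_left scaleR_diff_left)
      then show "snd (\<Sum>k\<in>{2..n}. csmul (c (ee k)) (ee k) + csmul (c (cconj (ee k))) (cconj (ee k))) = snd (p, q)"
        unfolding snd_sum using qe by simp
    qed
    finally show "v \<in> cspan (ee ` {2..n} \<union> cconj ` ee ` {2..n})" unfolding cspan_def v
      by (intro CollectI exI[of _ "ee ` {2..n} \<union> cconj ` ee ` {2..n}"] exI[of _ c]) auto
  qed
qed

end


lemma bil_wedge: assumes "linear \<alpha>" "linear \<beta>" shows "bilinear (wedge \<alpha> \<beta>)"
  using assms unfolding bilinear_def wedge_def linear_iff
  by (simp add: algebra_simps scaleR_conv_of_real)
lemma lin_cnjf: assumes "linear \<alpha>" shows "linear (cnjf \<alpha>)"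
  using assms unfolding cnjf_def linear_iff by (simp add: scaleR_conv_of_real)
lemma bil_cmul: assumes "bilinear f" shows "bilinear (\<lambda>x y. (c::complex) * f x y)"
  using assms unfolding bilinear_def linear_iff by (simp add: algebra_simps scaleR_conv_of_real)
lemma bil_add: assumes "bilinear f" "bilinear g" shows "bilinear (\<lambda>x y. f x y + g x y)"
  using assms unfolding bilinear_def linear_iff by (simp add: algebra_simps)
lemma bil_diff: assumes "bilinear f" "bilinear g" shows "bilinear (\<lambda>x y. f x y - g x y)"
  using assms unfolding bilinear_def linear_iff by (simp add: algebra_simps)
lemma bil_neg: assumes "bilinear f" shows "bilinear (\<lambda>x y. - f x y)"
  using assms unfolding bilinear_def linear_iff by (simp add: algebra_simps)
lemma bil_sum: assumes "\<And>j. j \<in> S \<Longrightarrow> bilinear (f j)" shows "bilinear (\<lambda>x y. \<Sum>j\<in>S. f j x y)"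
  using assms unfolding bilinear_def linear_iff by (simp add: sum.distrib scaleR_sum_right)
lemma bil_comp: assumes "bilinear B" "linear \<phi>" shows "bilinear (dCE B \<phi>)"
  using assms unfolding bilinear_def linear_iff dCE_def by (simp add: algebra_simps)

context frame
begin

definition vecs :: "'a set" where "vecs = u ` {1..n} \<union> (\<lambda>k. J (u k)) ` {1..n}"

lemma Bbil: "bilinear B" using L unfolding lie_algebra_def by blast

lemma basis_check:
  fixes f g :: "'a \<Rightarrow> 'a \<Rightarrow> complex"
  assumes bf: "bilinear f" and bg: "bilinear g"
    and af: "\<And>x y. f y x = - f x y" and ag: "\<And>x y. g y x = - g x y"
    and h1: "\<And>l. l \<in> {2..n} \<Longrightarrow> f (u 1) (u l) = g (u 1) (u l) \<and> f (u 1) (J (u l)) = g (u 1) (J (u l))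
        \<and> f (J (u 1)) (u l) = g (J (u 1)) (u l) \<and> f (J (u 1)) (J (u l)) = g (J (u 1)) (J (u l))"
    and h2: "f (u 1) (J (u 1)) = g (u 1) (J (u 1))"
    and h3: "\<And>s t. s \<in> a \<Longrightarrow> t \<in> a \<Longrightarrow> f s t = g s t"
  shows "f x y = g x y"
proof -
  have diag: "f x x = g x x" for x
  proof -
    have "f x x = 0" using af[of x x] by (simp add: eq_neg_iff_add_eq_0 mult_2[symmetric])
    moreover have "g x x = 0" using ag[of x x] by (simp add: eq_neg_iff_add_eq_0 mult_2[symmetric])
    ultimately show ?thesis by simp
  qed
  have uka: "u k \<in> a" "J (u k) \<in> a" if "k \<in> {2..n}" for k using ua Ja that by auto
  have chk: "f s t = g s t" if s: "s \<in> vecs" and t: "t \<in> vecs" for s t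
  proof -
    have "\<And>s t. s \<in> vecs \<Longrightarrow> t \<in> vecs \<Longrightarrow> (s \<in> {u 1, J (u 1)} \<or> s \<in> a) \<and> (t \<in> {u 1, J (u 1)} \<or> t \<in> a)"
    proof -
      fix s t assume "s \<in> vecs" "t \<in> vecs"
      moreover have "x \<in> vecs \<Longrightarrow> x \<in> {u 1, J (u 1)} \<or> x \<in> a" for x
      proof -
        assume "x \<in> vecs"
        then obtain k where k: "k \<in> {1..n}" and "x = u k \<or> x = J (u k)" unfolding vecs_def by auto
        then show ?thesis using uka[of k] by (cases "k = 1") auto
      qed
      ultimately show "(s \<in> {u 1, J (u 1)} \<or> s \<in> a) \<and> (t \<in> {u 1, J (u 1)} \<or> t \<in> a)" by blast
    qed
    note st = this[OF s t]
    have one: "f s t = g s t" if "s \<in> {u 1, J (u 1)}" "t \<in> vecs" "t \<notin> {u 1, J (u 1)}" for s t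
    proof -
      from that(2) obtain l where l: "l \<in> {1..n}" and tl: "t = u l \<or> t = J (u l)" unfolding vecs_def by auto
      have "l \<noteq> 1" using that(3) tl by auto
      then have l2: "l \<in> {2..n}" using l by auto
      show ?thesis using h1[OF l2] that(1) tl by auto
    qed
    show ?thesis
    proof (cases "s \<in> {u 1, J (u 1)}"; cases "t \<in> {u 1, J (u 1)}")
      assume "s \<in> {u 1, J (u 1)}" "t \<in> {u 1, J (u 1)}"
      then show ?thesis using h2 diag af[of "u 1" "J (u 1)"] ag[of "u 1" "J (u 1)"] by auto
    next
      assume "s \<in> {u 1, J (u 1)}" "t \<notin> {u 1, J (u 1)}" then show ?thesis using one t by blast
    next
      assume "s \<notin> {u 1, J (u 1)}" "t \<in> {u 1, J (u 1)}"
      then have "f t s = g t s" using one s by blast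
      then show ?thesis using af[of s t] ag[of s t] by simp
    next
      assume "s \<notin> {u 1, J (u 1)}" "t \<notin> {u 1, J (u 1)}" then show ?thesis using st h3 by blast
    qed
  qed
  show ?thesis
    by (rule bilinear_eq[OF bf bg, of UNIV vecs UNIV vecs]) (use spU chk in \<open>auto simp: vecs_def\<close>)
qed


definition bb where "bb = B (u 1) (J (u 1))"
definition lam :: real where "lam = - 2 * G bb (J (u 1))"
definition vv :: "nat \<Rightarrow> complex" where "vv i = cnj (2 * \<i> * ph i bb)"
definition A1 :: "nat \<Rightarrow> nat \<Rightarrow> complex" where "A1 i l = - ph i (B (u 1) (u l))"
definition A2 :: "nat \<Rightarrow> nat \<Rightarrow> complex" where "A2 i l = - ph i (B (u 1) (J (u l)))"
definition A3 :: "nat \<Rightarrow> nat \<Rightarrow> complex" where "A3 i l = - ph i (B (J (u 1)) (u l))"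
definition A4 :: "nat \<Rightarrow> nat \<Rightarrow> complex" where "A4 i l = - ph i (B (J (u 1)) (J (u l)))"
definition XX :: "nat \<Rightarrow> nat \<Rightarrow> complex" where "XX l i = 2 * (A4 i l - A1 i l)"
definition YY :: "nat \<Rightarrow> nat \<Rightarrow> complex" where "YY i l = cnj ((A1 i l + A4 i l) - \<i> * (A2 i l - A3 i l))"
definition ZZ :: "nat \<Rightarrow> nat \<Rightarrow> complex" where "ZZ i l = cnj (- (A1 i l + A4 i l) - \<i> * (A2 i l - A3 i l))"

lemma lam_nonneg: "lam \<ge> 0" unfolding lam_def bb_def using lam1 by simp

lemma n1in: "1 \<in> {1..n}" using n1 by simp
lemma in2: "j \<in> {2..n} \<Longrightarrow> j \<in> {1..n}" by auto

lemma v11: "ph 1 (u 1) = 1/2" using ph_u[OF n1in n1in] by simp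
lemma v12: "ph 1 (J (u 1)) = \<i>/2" using ph_Ju[OF n1in n1in] by simp
lemma vj1: "j \<in> {2..n} \<Longrightarrow> ph j (u 1) = 0" using ph_u[OF in2 n1in, of j] by auto
lemma vj2: "j \<in> {2..n} \<Longrightarrow> ph j (J (u 1)) = 0" using ph_Ju[OF in2 n1in, of j] by auto
lemma v1l: "l \<in> {2..n} \<Longrightarrow> ph 1 (u l) = 0" using ph_u[OF n1in in2, of l] by auto
lemma v1Jl: "l \<in> {2..n} \<Longrightarrow> ph 1 (J (u l)) = 0" using ph_Ju[OF n1in in2, of l] by auto
lemma vjl: "l \<in> {2..n} \<Longrightarrow> j \<in> {2..n} \<Longrightarrow> ph j (u l) = (if j = l then 1/2 else 0)" using ph_u[OF in2 in2, of j l] by auto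
lemma vjJl: "l \<in> {2..n} \<Longrightarrow> j \<in> {2..n} \<Longrightarrow> ph j (J (u l)) = (if j = l then \<i>/2 else 0)" using ph_Ju[OF in2 in2, of j l] by auto

lemma wedge_anti: "wedge \<alpha> \<beta> y x = - wedge \<alpha> \<beta> x y" unfolding wedge_def by simp
lemma dCE_anti: assumes "linear \<phi>" shows "dCE B \<phi> y x = - dCE B \<phi> x y"
  unfolding dCE_def lie_antisym[OF L, of x y] using assms by (simp add: linear_neg)
lemma B_a: "s \<in> a \<Longrightarrow> t \<in> a \<Longrightarrow> B s t = 0" using ab unfolding abelian_ideal_def by blast
lemma B_ideal: "t \<in> a \<Longrightarrow> B s t \<in> a"
proof -
  assume t: "t \<in> a"
  then have "B t s \<in> a" using ab unfolding abelian_ideal_def by blast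
  then have "- B t s \<in> a" using sub_a by (rule subspace_neg[rotated])
  then show "B s t \<in> a" unfolding lie_antisym[OF L, of t s] by simp
qed
lemma ua2: "l \<in> {2..n} \<Longrightarrow> u l \<in> a" using ua by blast
lemma uaJ2: "l \<in> {2..n} \<Longrightarrow> J (u l) \<in> a" using ua Ja by blast

lemma ph1_bb: "ph 1 bb = - \<i> * complex_of_real lam / 2"
  unfolding ph_def lam_def using lam0 by (simp add: bb_def)

lemma eq1: "dCE B (ph 1) x y = - complex_of_real lam * wedge (ph 1) (cnjf (ph 1)) x y"
proof (rule basis_check[where f = "dCE B (ph 1)" and g = "\<lambda>x y. - complex_of_real lam * wedge (ph 1) (cnjf (ph 1)) x y"])
  show "bilinear (dCE B (ph 1))" by (rule bil_comp[OF Bbil ph_lin])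
  show "bilinear (\<lambda>x y. - complex_of_real lam * wedge (ph 1) (cnjf (ph 1)) x y)"
    by (rule bil_cmul[OF bil_wedge[OF ph_lin lin_cnjf[OF ph_lin]]])
  show "\<And>x y. dCE B (ph 1) y x = - dCE B (ph 1) x y" by (rule dCE_anti[OF ph_lin])
  show "\<And>x y. - complex_of_real lam * wedge (ph 1) (cnjf (ph 1)) y x = - (- complex_of_real lam * wedge (ph 1) (cnjf (ph 1)) x y)"
    by (simp add: wedge_def algebra_simps)
next
  fix l assume l: "l \<in> {2..n}"
  have z: "ph 1 (B s (u l)) = 0" "ph 1 (B s (J (u l))) = 0" for s
    using ph1_a[OF B_ideal[OF ua2[OF l]]] ph1_a[OF B_ideal[OF uaJ2[OF l]]] by auto
  show "dCE B (ph 1) (u 1) (u l) = - complex_of_real lam * wedge (ph 1) (cnjf (ph 1)) (u 1) (u l) \<and>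
    dCE B (ph 1) (u 1) (J (u l)) = - complex_of_real lam * wedge (ph 1) (cnjf (ph 1)) (u 1) (J (u l)) \<and>
    dCE B (ph 1) (J (u 1)) (u l) = - complex_of_real lam * wedge (ph 1) (cnjf (ph 1)) (J (u 1)) (u l) \<and>
    dCE B (ph 1) (J (u 1)) (J (u l)) = - complex_of_real lam * wedge (ph 1) (cnjf (ph 1)) (J (u 1)) (J (u l))"
    unfolding dCE_def wedge_def cnjf_def using l by (simp add: z v1l v1Jl del: One_nat_def)
next
  show "dCE B (ph 1) (u 1) (J (u 1)) = - complex_of_real lam * wedge (ph 1) (cnjf (ph 1)) (u 1) (J (u 1))"
    unfolding dCE_def wedge_def cnjf_def bb_def[symmetric] ph1_bb by (simp add: v11 v12 field_simps del: One_nat_def)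
next
  fix s t assume s: "s \<in> a" and t: "t \<in> a"
  show "dCE B (ph 1) s t = - complex_of_real lam * wedge (ph 1) (cnjf (ph 1)) s t"
    unfolding dCE_def wedge_def cnjf_def using B_a[OF s t] ph1_a[OF s] ph1_a[OF t] by simp
qed


lemma integ_A: assumes i: "i \<in> {2..n}" shows "A2 i l = \<i> * (A1 i l - A4 i l) - A3 i l"
proof -
  have N: "B (J (u 1)) (J (u l)) - J (B (J (u 1)) (u l)) - J (B (u 1) (J (u l))) - B (u 1) (u l) = 0"
    using integ unfolding integrable_cx_def by blast
  have "ph i (B (J (u 1)) (J (u l)) - J (B (J (u 1)) (u l)) - J (B (u 1) (J (u l))) - B (u 1) (u l)) = 0"
    unfolding N by simp
  then have "- A4 i l + \<i> * A3 i l + \<i> * A2 i l + A1 i l = 0"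
    unfolding A1_def A2_def A3_def A4_def by (simp add: ph_J algebra_simps)
  then have "\<i> * A2 i l = A4 i l - A1 i l - \<i> * A3 i l" by (simp add: algebra_simps)
  from i_solve[OF this] show ?thesis by (simp add: algebra_simps)
qed

definition gi :: "nat \<Rightarrow> 'a \<Rightarrow> 'a \<Rightarrow> complex" where
  "gi i x y = - cnj (vv i) * wedge (ph 1) (cnjf (ph 1)) x y
        - (\<Sum>j\<in>{2..n}. XX j i * wedge (ph 1) (ph j) x y)
        + (\<Sum>j\<in>{2..n}. cnj (YY i j) * wedge (cnjf (ph 1)) (ph j) x y)
        - (\<Sum>j\<in>{2..n}. cnj (ZZ i j) * wedge (ph 1) (cnjf (ph j)) x y)"

lemma gi_bil: "bilinear (gi i)"
proof -
  have "bilinear (\<lambda>x y. - cnj (vv i) * wedge (ph 1) (cnjf (ph 1)) x y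
        - (\<Sum>j\<in>{2..n}. XX j i * wedge (ph 1) (ph j) x y)
        + (\<Sum>j\<in>{2..n}. cnj (YY i j) * wedge (cnjf (ph 1)) (ph j) x y)
        - (\<Sum>j\<in>{2..n}. cnj (ZZ i j) * wedge (ph 1) (cnjf (ph j)) x y))"
    by (intro bil_diff bil_add bil_sum bil_cmul bil_wedge ph_lin lin_cnjf)
  then show ?thesis unfolding gi_def[abs_def] .
qed

lemma gi_anti: "gi i y x = - gi i x y"
  unfolding gi_def wedge_def by (simp add: algebra_simps sum_subtractf)

lemma eqi: assumes i: "i \<in> {2..n}" shows "dCE B (ph i) x y = gi i x y"
proof (rule basis_check[where f = "dCE B (ph i)" and g = "gi i"])
  show "bilinear (dCE B (ph i))" by (rule bil_comp[OF Bbil ph_lin])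
  show "bilinear (gi i)" by (rule gi_bil)
  show "\<And>x y. dCE B (ph i) y x = - dCE B (ph i) x y" by (rule dCE_anti[OF ph_lin])
  show "\<And>x y. gi i y x = - gi i x y" by (rule gi_anti)
next
  fix l assume l: "l \<in> {2..n}"
  note I = integ_A[OF i, of l]
  show "dCE B (ph i) (u 1) (u l) = gi i (u 1) (u l) \<and>
    dCE B (ph i) (u 1) (J (u l)) = gi i (u 1) (J (u l)) \<and>
    dCE B (ph i) (J (u 1)) (u l) = gi i (J (u 1)) (u l) \<and>
    dCE B (ph i) (J (u 1)) (J (u l)) = gi i (J (u 1)) (J (u l))"
  proof (intro conjI)
    show "dCE B (ph i) (u 1) (u l) = gi i (u 1) (u l)"
      unfolding dCE_def gi_def wedge_def cnjf_def using l
      by (simp add: v11 v12 vj1 vj2 v1l v1Jl vjl vjJl cnj_ifz mult_ifz_r mult_ifz_l minus_ifz div_ifz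
          XX_def YY_def ZZ_def A1_def[symmetric] I field_simps cong: if_cong del: One_nat_def)
    show "dCE B (ph i) (u 1) (J (u l)) = gi i (u 1) (J (u l))"
      unfolding dCE_def gi_def wedge_def cnjf_def using l
      by (simp add: v11 v12 vj1 vj2 v1l v1Jl vjl vjJl cnj_ifz mult_ifz_r mult_ifz_l minus_ifz div_ifz
          XX_def YY_def ZZ_def A2_def[symmetric] I field_simps cong: if_cong del: One_nat_def)
    show "dCE B (ph i) (J (u 1)) (u l) = gi i (J (u 1)) (u l)"
      unfolding dCE_def gi_def wedge_def cnjf_def using l
      by (simp add: v11 v12 vj1 vj2 v1l v1Jl vjl vjJl cnj_ifz mult_ifz_r mult_ifz_l minus_ifz div_ifz
          XX_def YY_def ZZ_def A3_def[symmetric] I field_simps cong: if_cong del: One_nat_def)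
    show "dCE B (ph i) (J (u 1)) (J (u l)) = gi i (J (u 1)) (J (u l))"
      unfolding dCE_def gi_def wedge_def cnjf_def using l
      by (simp add: v11 v12 vj1 vj2 v1l v1Jl vjl vjJl cnj_ifz mult_ifz_r mult_ifz_l minus_ifz div_ifz
          XX_def YY_def ZZ_def A4_def[symmetric] I field_simps cong: if_cong del: One_nat_def)
  qed
next
  show "dCE B (ph i) (u 1) (J (u 1)) = gi i (u 1) (J (u 1))"
    unfolding dCE_def gi_def wedge_def cnjf_def bb_def[symmetric] vv_def
    by (simp add: v11 v12 vj1 vj2 field_simps del: One_nat_def)
next
  fix s t assume s: "s \<in> a" and t: "t \<in> a"
  show "dCE B (ph i) s t = gi i s t"
    unfolding dCE_def gi_def wedge_def cnjf_def using B_a[OF s t] ph1_a[OF s] ph1_a[OF t] by simp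
qed

end



theorem mainTheorem8:
  fixes B :: "'g::euclidean_space \<Rightarrow> 'g \<Rightarrow> 'g" and J :: "'g \<Rightarrow> 'g"
    and G :: "'g \<Rightarrow> 'g \<Rightarrow> real" and a :: "'g set" and n :: nat
  assumes "lie_algebra B"
    and "DIM('g) = 2 * n"
    and "hermitian_structure B J G"
    and "abelian_ideal B a"
    and "dim a + 2 = DIM('g)"
    and "J ` a = a"
  shows "(\<exists>e \<phi> lam v X Y Z. unitary_frame J G n e \<and> dual_coframe n e \<phi> \<and>
            cspan (e ` {2..n} \<union> cconj ` e ` {2..n}) = complexify a \<and>
            lam \<ge> 0 \<and> structure_eqs B n \<phi> lam v X Y Z)
       \<and> (\<forall>e \<phi> lam v X Y Z. unitary_frame J G n e \<and> dual_coframe n e \<phi> \<and>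
            cspan (e ` {2..n} \<union> cconj ` e ` {2..n}) = complexify a \<and>
            structure_eqs B n \<phi> lam v X Y Z \<longrightarrow> structure_rels n lam X Y Z)"
proof
  note L = assms(1)
  have ic: "integrable_cx B J" and hm: "herm_metric J G" using assms(3) unfolding hermitian_structure_def by auto
  have linJ: "linear J" and JJ: "\<And>x. J (J x) = - x" using ic unfolding integrable_cx_def by auto
  have hJG: "hmet J G" by (rule hmet.intro[OF linJ JJ hm])
  interpret H: hmet J G by (rule hJG)
  have sa: "subspace a" using assms(4) unfolding abelian_ideal_def by blast
  have Ja: "\<forall>x\<in>a. J x \<in> a" using assms(6) by blast
  obtain u where u: "H.ONF u {1..n}" "\<forall>k\<in>{2..n}. u k \<in> a" "\<forall>x\<in>a. G x (u 1) = 0 \<and> G x (J (u 1)) = 0"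
     "G (B (u 1) (J (u 1))) (u 1) = 0" "G (B (u 1) (J (u 1))) (J (u 1)) \<le> 0"
     "span (u ` {2..n} \<union> (\<lambda>k. J (u k)) ` {2..n}) = a"
     "span (u ` {1..n} \<union> (\<lambda>k. J (u k)) ` {1..n}) = UNIV"
    using H.frame_exists[OF L sa Ja assms(5) assms(2)] by blast
  have n1: "1 \<le> n" using assms(2) DIM_positive[where 'a='g] by linarith
  interpret F: frame J G B a n u
    by (intro frame.intro frame_axioms.intro hJG) (use L ic assms(4) Ja u n1 in auto)
  show "\<exists>e \<phi> lam v X Y Z. unitary_frame J G n e \<and> dual_coframe n e \<phi> \<and>
            cspan (e ` {2..n} \<union> cconj ` e ` {2..n}) = complexify a \<and>
            lam \<ge> 0 \<and> structure_eqs B n \<phi> lam v X Y Z"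
  proof (intro exI conjI)
    show "unitary_frame J G n F.ee" by (rule F.unitary)
    show "dual_coframe n F.ee F.ph" by (rule F.dual)
    show "cspan (F.ee ` {2..n} \<union> cconj ` F.ee ` {2..n}) = complexify a" by (rule F.cspan_a)
    show "F.lam \<ge> 0" by (rule F.lam_nonneg)
    show "structure_eqs B n F.ph F.lam F.vv F.XX F.YY F.ZZ"
      unfolding structure_eqs_def using F.eq1 F.eqi unfolding F.gi_def by blast
  qed
next
  show "\<forall>e \<phi> lam v X Y Z. unitary_frame J G n e \<and> dual_coframe n e \<phi> \<and>
            cspan (e ` {2..n} \<union> cconj ` e ` {2..n}) = complexify a \<and>
            structure_eqs B n \<phi> lam v X Y Z \<longrightarrow> structure_rels n lam X Y Z"
    using part2[OF assms(1)] by blast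
qed

end
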